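(* Let $(V_1,V_2)$ be a pair of commuting isometries on a Hilbert space $\mathcal H$ with $C(V_1,V_2)\ge0$ and $C(V_1,V_2)\neq0$, and let $V=V_1V_2$. Then there is a non-trivial (nonzero) Hilbert space $\mathcal L\subsetneq\ker V^*$ such that, up to unitary equivalence, $\mathcal H=\mathcal H_0\oplus\mathcal H_0^\perp$ with $\mathcal H_0=H^2_{\mathbb D^2}\otimes\mathcal L$, and in this decomposition $$V_i=\begin{pmatrix}M_{z_i}\otimes I_{\mathcal L}&0\\0&V_{i0}\end{pmatrix},\quad i=1,2,$$ where the defect operator $C(V_{10},V_{20})$ is zero. Moreover, the dimension of $\mathcal L$ is the same as the dimension of the range of $C(V_1,V_2)$.
   Context: Defect operator: $C(V_1,V_2)=I-V_1V_1^*-V_2V_2^*+V_1V_2V_2^*V_1^*$. $H^2_{\mathbb D^2}$ is the Hardy space of the bidisc and $M_{z_1},M_{z_2}$ are multiplication by the coordinate functions on it. *)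

theory Defs
  imports "HOL-Analysis.Analysis"
begin

class complex_vector = real_vector +
  fixes scaleC :: "complex \<Rightarrow> 'a \<Rightarrow> 'a"
  assumes scaleC_add_right: "scaleC a (x + y) = scaleC a x + scaleC a y"
    and scaleC_add_left: "scaleC (a + b) x = scaleC a x + scaleC b x"
    and scaleC_scaleC: "scaleC a (scaleC b x) = scaleC (a * b) x"
    and scaleC_one: "scaleC 1 x = x"
    and scaleR_scaleC: "scaleR r x = scaleC (complex_of_real r) x"

class complex_inner = complex_vector + real_normed_vector +
  fixes cinner :: "'a \<Rightarrow> 'a \<Rightarrow> complex"
  assumes cinner_commute: "cinner x y = cnj (cinner y x)"
    and cinner_add_right: "cinner x (y + z) = cinner x y + cinner x z"
    and cinner_scaleC_right: "cinner x (scaleC c y) = c * cinner x y"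
    and cinner_nonneg: "0 \<le> Re (cinner x x)"
    and cinner_eq_zero_iff: "cinner x x = 0 \<longleftrightarrow> x = 0"
    and norm_eq_sqrt_cinner: "norm x = sqrt (Re (cinner x x))"

class chilbert_space = complex_inner + complete_space

definition bounded_clinear :: "('a::complex_inner \<Rightarrow> 'b::complex_inner) \<Rightarrow> bool" where
  "bounded_clinear T \<longleftrightarrow> (\<forall>x y. T (x + y) = T x + T y) \<and> (\<forall>c x. T (scaleC c x) = scaleC c (T x))
     \<and> (\<exists>K. \<forall>x. norm (T x) \<le> norm x * K)"

definition adj :: "('a::complex_inner \<Rightarrow> 'a) \<Rightarrow> ('a \<Rightarrow> 'a)" where
  "adj T = (SOME S. \<forall>x y. cinner (S x) y = cinner x (T y))"

definition isometry :: "('a::complex_inner \<Rightarrow> 'a) \<Rightarrow> bool" where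
  "isometry V \<longleftrightarrow> bounded_clinear V \<and> (\<forall>x. norm (V x) = norm x)"

definition positive_op :: "('a::complex_inner \<Rightarrow> 'a) \<Rightarrow> bool" where
  "positive_op T \<longleftrightarrow> (\<forall>x. 0 \<le> Re (cinner x (T x)) \<and> Im (cinner x (T x)) = 0)"

definition defect :: "('a::complex_inner \<Rightarrow> 'a) \<Rightarrow> ('a \<Rightarrow> 'a) \<Rightarrow> 'a \<Rightarrow> 'a" where
  "defect V1 V2 = (\<lambda>x. x - V1 (adj V1 x) - V2 (adj V2 x) + V1 (V2 (adj V2 (adj V1 x))))"

text \<open>Adjoint of (the restriction to S of) an operator leaving the closed subspace S invariant,
  computed in the Hilbert space S; only its values on S are meaningful.\<close>
definition adj_on :: "'a::complex_inner set \<Rightarrow> ('a \<Rightarrow> 'a) \<Rightarrow> ('a \<Rightarrow> 'a)" where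
  "adj_on S T = (SOME A. (\<forall>x\<in>S. A x \<in> S) \<and> (\<forall>x\<in>S. \<forall>y\<in>S. cinner (A x) y = cinner x (T y)))"

definition defect_on :: "'a::complex_inner set \<Rightarrow> ('a \<Rightarrow> 'a) \<Rightarrow> ('a \<Rightarrow> 'a) \<Rightarrow> 'a \<Rightarrow> 'a" where
  "defect_on S V1 V2 = (\<lambda>x. x - V1 (adj_on S V1 x) - V2 (adj_on S V2 x)
                               + V1 (V2 (adj_on S V2 (adj_on S V1 x))))"

definition csubspace :: "'a::complex_vector set \<Rightarrow> bool" where
  "csubspace S \<longleftrightarrow> 0 \<in> S \<and> (\<forall>x\<in>S. \<forall>y\<in>S. x + y \<in> S) \<and> (\<forall>c. \<forall>x\<in>S. scaleC c x \<in> S)"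

definition closed_csubspace :: "'a::{complex_vector,topological_space} set \<Rightarrow> bool" where
  "closed_csubspace S \<longleftrightarrow> csubspace S \<and> closed S"

definition orth_compl :: "'a::complex_inner set \<Rightarrow> 'a set" where
  "orth_compl S = {y. \<forall>x\<in>S. cinner x y = 0}"

definition cspan :: "'a::complex_vector set \<Rightarrow> 'a set" where
  "cspan B = {x. \<exists>F c. finite F \<and> F \<subseteq> B \<and> x = (\<Sum>b\<in>F. scaleC (c b) b)}"

definition orthonormal :: "'a::complex_inner set \<Rightarrow> bool" where
  "orthonormal B \<longleftrightarrow> (\<forall>b\<in>B. norm b = 1) \<and> (\<forall>b\<in>B. \<forall>b'\<in>B. b \<noteq> b' \<longrightarrow> cinner b b' = 0)"

definition is_onb :: "'a::complex_inner set \<Rightarrow> 'a set \<Rightarrow> bool" where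
  "is_onb S B \<longleftrightarrow> B \<subseteq> S \<and> orthonormal B \<and> closure (cspan B) = S"

definition same_hilbert_dim :: "'a::complex_inner set \<Rightarrow> 'a set \<Rightarrow> bool" where
  "same_hilbert_dim S T \<longleftrightarrow> (\<exists>B1 B2 f. is_onb S B1 \<and> is_onb T B2 \<and> bij_betw f B1 B2)"

text \<open>H^2(D^2) \<otimes> L, realised (via Taylor coefficients, unitarily) as the L-valued
  square-summable families indexed by N x N; coefficient (m,n) is that of z1^m z2^n.\<close>
definition hardy2_L :: "'a::complex_inner set \<Rightarrow> (nat \<times> nat \<Rightarrow> 'a) set" where
  "hardy2_L L = {f. (\<forall>k. f k \<in> L) \<and> (\<lambda>k. (norm (f k))\<^sup>2) summable_on UNIV}"

definition Mz1 :: "(nat \<times> nat \<Rightarrow> 'a::zero) \<Rightarrow> (nat \<times> nat \<Rightarrow> 'a)" where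
  "Mz1 f = (\<lambda>(m, n). if m = 0 then 0 else f (m - 1, n))"

definition Mz2 :: "(nat \<times> nat \<Rightarrow> 'a::zero) \<Rightarrow> (nat \<times> nat \<Rightarrow> 'a)" where
  "Mz2 f = (\<lambda>(m, n). if n = 0 then 0 else f (m, n - 1))"

definition unitary_onto_hardy :: "'a::complex_inner set \<Rightarrow> 'a set \<Rightarrow> ('a \<Rightarrow> nat \<times> nat \<Rightarrow> 'a) \<Rightarrow> bool" where
  "unitary_onto_hardy H0 L U \<longleftrightarrow>
     bij_betw U H0 (hardy2_L L) \<and>
     (\<forall>x\<in>H0. \<forall>y\<in>H0. U (x + y) = (\<lambda>k. U x k + U y k)) \<and>
     (\<forall>c. \<forall>x\<in>H0. U (scaleC c x) = (\<lambda>k. scaleC c (U x k))) \<and>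
     (\<forall>x\<in>H0. (norm x)\<^sup>2 = infsum (\<lambda>k. (norm (U x k))\<^sup>2) UNIV)"

end

theory Submission
  imports Defs
begin


section \<open>Basic algebra\<close>


lemma cinner_add_left: "cinner (x + y) z = cinner x z + cinner (y::'a::complex_inner) z"
  using cinner_commute[of "x+y" z] cinner_add_right[of z x y] cinner_commute[of x z] cinner_commute[of y z]
  by simp

lemma cinner_scaleC_left: "cinner (scaleC c x) (y::'a::complex_inner) = cnj c * cinner x y"
  using cinner_commute[of "scaleC c x" y] cinner_scaleC_right[of y c x] cinner_commute[of x y]
  by simp

lemma cinner_zero_right[simp]: "cinner (x::'a::complex_inner) 0 = 0"
proof -
  have h: "cinner x 0 = cinner x 0 + cinner x 0" using cinner_add_right[of x 0 0] by (simp only: add_0_left)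
  then show ?thesis by (simp only: add_cancel_right_right)
qed

lemma cinner_zero_left[simp]: "cinner 0 (x::'a::complex_inner) = 0"
proof -
  have h: "cinner 0 x = cinner 0 x + cinner 0 x" using cinner_add_left[of 0 0 x] by (simp only: add_0_left)
  then show ?thesis by (simp only: add_cancel_right_right)
qed

lemma cinner_minus_right: "cinner (x::'a::complex_inner) (- y) = - cinner x y"
proof -
  have "cinner x y + cinner x (- y) = cinner x (y + - y)" by (rule cinner_add_right[symmetric])
  also have "\<dots> = 0" by simp
  finally have "cinner x y + cinner x (- y) = 0" .
  then show ?thesis by (rule minus_unique[symmetric])
qed

lemma cinner_minus_left: "cinner (- x) (y::'a::complex_inner) = - cinner x y"
proof -
  have "cinner x y + cinner (- x) y = cinner (x + - x) y" by (rule cinner_add_left[symmetric])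
  also have "\<dots> = 0" by simp
  finally have "cinner x y + cinner (- x) y = 0" .
  then show ?thesis by (rule minus_unique[symmetric])
qed

lemma cinner_diff_right: "cinner (x::'a::complex_inner) (y - z) = cinner x y - cinner x z"
  by (simp only: diff_conv_add_uminus cinner_add_right cinner_minus_right)

lemma cinner_diff_left: "cinner (x - y) (z::'a::complex_inner) = cinner x z - cinner y z"
  by (simp only: diff_conv_add_uminus cinner_add_left cinner_minus_left)

lemma scaleC_zero_right[simp]: "scaleC c (0::'a::complex_vector) = 0"
proof -
  have h: "scaleC c 0 = scaleC c 0 + scaleC c (0::'a)" using scaleC_add_right[of c 0 0] by (simp only: add_0_left)
  then show ?thesis by (simp only: add_cancel_right_right)
qed

lemma scaleC_zero_left[simp]: "scaleC 0 (x::'a::complex_vector) = 0"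
  using scaleR_scaleC[of 0 x, symmetric] by simp

lemma scaleC_minus_right: "scaleC c (- x) = - scaleC c (x::'a::complex_vector)"
proof -
  have "scaleC c x + scaleC c (- x) = scaleC c (x + - x)" by (rule scaleC_add_right[symmetric])
  also have "\<dots> = 0" by simp
  finally have "scaleC c x + scaleC c (- x) = 0" .
  then show ?thesis by (rule minus_unique[symmetric])
qed

lemma scaleC_diff_right: "scaleC c (x - y) = scaleC c x - scaleC c (y::'a::complex_vector)"
  by (simp only: diff_conv_add_uminus scaleC_add_right scaleC_minus_right)

lemma scaleC_minus_left: "scaleC (- c) x = - scaleC c (x::'a::complex_vector)"
proof -
  have "scaleC c x + scaleC (- c) x = scaleC (c + - c) x" by (rule scaleC_add_left[symmetric])
  also have "\<dots> = 0" by simp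
  finally have "scaleC c x + scaleC (- c) x = 0" .
  then show ?thesis by (rule minus_unique[symmetric])
qed

lemma scaleC_diff_left: "scaleC (c - d) x = scaleC c x - scaleC d (x::'a::complex_vector)"
  by (simp only: diff_conv_add_uminus scaleC_add_left scaleC_minus_left)

lemma cinner_self_Im: "Im (cinner x (x::'a::complex_inner)) = 0"
proof -
  have "Im (cinner x x) = Im (cnj (cinner x x))" using cinner_commute[of x x] by (rule arg_cong)
  then have "Im (cinner x x) = - Im (cinner x x)" by simp
  then show ?thesis by linarith
qed

lemma cinner_self: "cinner x (x::'a::complex_inner) = complex_of_real ((norm x)\<^sup>2)"
proof -
  have "(norm x)\<^sup>2 = Re (cinner x x)" using norm_eq_sqrt_cinner[of x] cinner_nonneg[of x] by simp
  then show ?thesis using cinner_self_Im[of x] by (simp add: complex_eq_iff)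
qed

lemma norm_sq_cinner: "(norm x)\<^sup>2 = Re (cinner x (x::'a::complex_inner))"
  by (simp add: cinner_self)

lemma cinner_ext: "(\<And>y. cinner a y = cinner b (y::'a::complex_inner)) \<Longrightarrow> a = b"
proof -
  assume "\<And>y. cinner a y = cinner b y"
  then have "cinner (a - b) (a - b) = 0" by (simp add: cinner_diff_left)
  then show "a = b" by (simp add: cinner_eq_zero_iff)
qed

lemma cinner_ext_in: 
  assumes "csubspace S" "a \<in> S" "b \<in> S" "\<And>y. y \<in> S \<Longrightarrow> cinner a y = cinner b (y::'a::complex_inner)"
  shows "a = b"
proof -
  have "scaleC (-1) b \<in> S" using assms(1,3) unfolding csubspace_def by blast
  then have "a + scaleC (-1) b \<in> S" using assms(1,2) unfolding csubspace_def by blast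
  then have "a - b \<in> S" by (simp add: scaleC_minus_left scaleC_one)
  then have "cinner (a - b) (a - b) = 0" using assms(4) by (simp add: cinner_diff_left)
  then show ?thesis by (simp add: cinner_eq_zero_iff)
qed

lemma cinner_scaleR_left: "cinner (scaleR r x) (y::'a::complex_inner) = of_real r * cinner x y"
  by (simp add: scaleR_scaleC cinner_scaleC_left)

lemma cinner_scaleR_right: "cinner y (scaleR r (x::'a::complex_inner)) = of_real r * cinner y x"
  by (simp add: scaleR_scaleC cinner_scaleC_right)

lemma norm_add_sq: "(norm (x + y))\<^sup>2 = (norm x)\<^sup>2 + 2 * Re (cinner x y) + (norm (y::'a::complex_inner))\<^sup>2"
proof -
  have "Re (cinner y x) = Re (cinner x y)" using arg_cong[OF cinner_commute[of y x], of Re] by simp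
  then show ?thesis by (simp add: norm_sq_cinner cinner_add_left cinner_add_right)
qed

lemma norm_diff_sq: "(norm (x - y))\<^sup>2 = (norm x)\<^sup>2 - 2 * Re (cinner x y) + (norm (y::'a::complex_inner))\<^sup>2"
  using norm_add_sq[of x "-y"] by (simp add: cinner_minus_right)

lemma norm_scaleC: "norm (scaleC c (x::'a::complex_inner)) = cmod c * norm x"
proof -
  have "(norm (scaleC c x))\<^sup>2 = Re (cnj c * c * cinner x x)"
    by (simp only: norm_sq_cinner cinner_scaleC_left cinner_scaleC_right mult.assoc mult.left_commute[of c "cnj c"])
  also have "cnj c * c = complex_of_real ((cmod c)\<^sup>2)"
    by (metis complex_norm_square mult.commute)
  also have "Re (complex_of_real ((cmod c)\<^sup>2) * cinner x x) = ((cmod c) * norm x)\<^sup>2"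
    by (simp add: cinner_self power_mult_distrib)
  finally show ?thesis by (simp add: power2_eq_iff_nonneg)
qed

lemma Cauchy_Schwarz: "cmod (cinner x y) \<le> norm x * norm (y::'a::complex_inner)"
proof (cases "x = 0")
  case True then show ?thesis by simp
next
  case False
  then have nx: "(norm x)\<^sup>2 > 0" by simp
  define t where "t = cinner x y / cinner x x"
  define z where "z = y - scaleC t x"
  have xx: "cinner x x \<noteq> 0" using False cinner_eq_zero_iff by blast
  have xz: "cinner x z = 0" unfolding z_def t_def using xx
    by (simp add: cinner_diff_right cinner_scaleC_right)
  have zx: "cinner z (scaleC t x) = 0" using xz cinner_commute[of x z]
    by (simp add: cinner_scaleC_right)
  have "(norm y)\<^sup>2 = (norm (z + scaleC t x))\<^sup>2" by (simp add: z_def)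
  also have "\<dots> = (norm z)\<^sup>2 + (norm (scaleC t x))\<^sup>2" using zx by (simp add: norm_add_sq)
  finally have "(norm (scaleC t x))\<^sup>2 \<le> (norm y)\<^sup>2" by simp
  then have "(cmod t * norm x)\<^sup>2 \<le> (norm y)\<^sup>2" by (simp add: norm_scaleC)
  moreover have "cmod t = cmod (cinner x y) / (norm x)\<^sup>2"
    by (simp add: t_def cinner_self norm_divide norm_power)
  ultimately have "(cmod (cinner x y) / norm x)\<^sup>2 \<le> (norm y)\<^sup>2"
    using False by (simp add: power2_eq_square field_simps)
  then have "cmod (cinner x y) / norm x \<le> norm y"
    by (simp add: power2_le_iff_abs_le)
  then show ?thesis using False by (simp add: field_simps mult.commute)
qed

lemma bounded_linear_cinner_right: "bounded_linear (cinner (x::'a::complex_inner))"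
  apply (rule bounded_linear_intro[where K="norm x"])
    apply (simp add: cinner_add_right)
   apply (simp add: cinner_scaleR_right scaleR_conv_of_real)
  using Cauchy_Schwarz by (metis mult.commute)

lemma bounded_linear_cinner_left: "bounded_linear (\<lambda>y. cinner y (x::'a::complex_inner))"
  apply (rule bounded_linear_intro[where K="norm x"])
    apply (simp add: cinner_add_left)
   apply (simp add: cinner_scaleR_left scaleR_conv_of_real)
  using Cauchy_Schwarz by (metis cinner_commute complex_mod_cnj)


lemma parallelogram: "(norm (a - b))\<^sup>2 + (norm (a + b))\<^sup>2 = 2 * (norm a)\<^sup>2 + 2 * (norm (b::'a::complex_inner))\<^sup>2"
  by (simp add: norm_add_sq norm_diff_sq)

lemma zero_from_var:
  assumes "\<And>c. Re (c * z) \<le> 0"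
  shows "z = 0"
proof -
  have "Re (cnj z * z) \<le> 0" by (rule assms)
  moreover have "cnj z * z = complex_of_real ((cmod z)\<^sup>2)"
    by (metis complex_norm_square mult.commute)
  ultimately have "(cmod z)\<^sup>2 \<le> 0" by simp
  then show ?thesis by simp
qed

lemma proj_exists:
  fixes M :: "'a::chilbert_space set" and x :: 'a
  assumes cl: "closed M" and cv: "convex M" and ne: "M \<noteq> {}"
  shows "\<exists>p\<in>M. \<forall>m\<in>M. Re (cinner (x - p) (m - p)) \<le> 0"
proof -
  define D where "D = (\<lambda>m. (norm (x - m))\<^sup>2) ` M"
  define \<delta> where "\<delta> = Inf D"
  have bdd: "bdd_below D" unfolding D_def by (rule bdd_belowI[where m=0]) auto
  have low: "\<delta> \<le> (norm (x - m))\<^sup>2" if "m \<in> M" for m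
    unfolding \<delta>_def using bdd that by (auto simp: D_def intro!: cInf_lower)
  have "\<exists>m\<in>M. (norm (x - m))\<^sup>2 < \<delta> + inverse (real (Suc n))" for n
  proof -
    have "Inf D < \<delta> + inverse (real (Suc n))" unfolding \<delta>_def by simp
    then obtain d where "d \<in> D" "d < \<delta> + inverse (real (Suc n))"
      using cInf_lessD[of D] ne D_def by blast
    then show ?thesis unfolding D_def by auto
  qed
  then obtain m where mM: "\<And>n. m n \<in> M"
    and mless: "\<And>n. (norm (x - m n))\<^sup>2 < \<delta> + inverse (real (Suc n))"
    by metis
  have dist_bd: "(norm (m i - m j))\<^sup>2 \<le> 2 * inverse (real (Suc i)) + 2 * inverse (real (Suc j))" for i j
  proof -
    define mid where "mid = (1/2::real) *\<^sub>R m i + (1/2::real) *\<^sub>R m j"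
    have "mid \<in> M" unfolding mid_def by (rule convexD[OF cv mM mM]) auto
    then have l: "\<delta> \<le> (norm (x - mid))\<^sup>2" by (rule low)
    have e: "(x - m j) + (x - m i) = 2 *\<^sub>R (x - mid)"
      unfolding mid_def by (simp add: algebra_simps scaleR_2)
    have "(norm ((x - m j) - (x - m i)))\<^sup>2 + (norm ((x - m j) + (x - m i)))\<^sup>2
        = 2 * (norm (x - m j))\<^sup>2 + 2 * (norm (x - m i))\<^sup>2" by (rule parallelogram)
    moreover have "(norm ((x - m j) + (x - m i)))\<^sup>2 = 4 * (norm (x - mid))\<^sup>2"
      unfolding e by (simp add: power_mult_distrib)
    moreover have "(x - m j) - (x - m i) = m i - m j" by simp
    ultimately have "(norm (m i - m j))\<^sup>2 = 2 * (norm (x - m j))\<^sup>2 + 2 * (norm (x - m i))\<^sup>2 - 4 * (norm (x - mid))\<^sup>2"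
      by simp
    then show ?thesis using mless[of i] mless[of j] l by linarith
  qed
  have "Cauchy m"
  proof (rule metric_CauchyI)
    fix e :: real assume e: "0 < e"
    obtain N :: nat where N: "4 / e\<^sup>2 < real N" using reals_Archimedean2 by blast
    have Npos: "0 < real N" using N e by (smt (verit) divide_pos_pos zero_less_power)
    have "\<forall>i\<ge>N. \<forall>j\<ge>N. dist (m i) (m j) < e"
    proof (intro allI impI)
      fix i j assume ij: "N \<le> i" "N \<le> j"
      have a: "inverse (real (Suc i)) \<le> inverse (real N)"
        using ij Npos by (intro le_imp_inverse_le) auto
      have b: "inverse (real (Suc j)) \<le> inverse (real N)"
        using ij Npos by (intro le_imp_inverse_le) auto
      have "4 * inverse (real N) < e\<^sup>2"
        using N Npos e by (simp add: field_simps)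
      then have "(dist (m i) (m j))\<^sup>2 < e\<^sup>2"
        using dist_bd[of i j] a b by (simp add: dist_norm)
      then show "dist (m i) (m j) < e"
        using e by (simp add: power2_less_imp_less)
    qed
    then show "\<exists>M. \<forall>i\<ge>M. \<forall>j\<ge>M. dist (m i) (m j) < e" by blast
  qed
  then obtain p where mp: "m \<longlonglongrightarrow> p"
    using Cauchy_convergent_iff convergent_def by blast
  have pM: "p \<in> M" using closed_sequentially[OF cl mM mp] .
  have t1: "(\<lambda>n. (norm (x - m n))\<^sup>2) \<longlonglongrightarrow> (norm (x - p))\<^sup>2"
    by (intro tendsto_intros mp)
  have t2: "(\<lambda>n. \<delta> + inverse (real (Suc n))) \<longlonglongrightarrow> \<delta> + 0"
    by (intro tendsto_intros LIMSEQ_inverse_real_of_nat)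
  have "(norm (x - p))\<^sup>2 \<le> \<delta> + 0"
    by (rule LIMSEQ_le[OF t1 t2]) (use mless less_imp_le in blast)
  then have pmin: "(norm (x - p))\<^sup>2 \<le> (norm (x - q))\<^sup>2" if "q \<in> M" for q
    using low[OF that] by linarith
  have "Re (cinner (x - p) (q - p)) \<le> 0" if qM: "q \<in> M" for q
  proof (rule ccontr)
    define r where "r = Re (cinner (x - p) (q - p))"
    assume "\<not> ?thesis"
    then have r: "r > 0" by (simp add: r_def)
    define v where "v = (norm (q - p))\<^sup>2"
    have v0: "v \<ge> 0" by (simp add: v_def)
    define t where "t = r / (v + r + 1)"
    have t0: "0 < t" and t1: "t \<le> 1" using r v0 by (auto simp: t_def field_simps)
    have "(1 - t) *\<^sub>R p + t *\<^sub>R q \<in> M" by (rule convexD[OF cv pM qM]) (use t0 t1 in auto)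
    then have "(norm (x - p))\<^sup>2 \<le> (norm (x - ((1 - t) *\<^sub>R p + t *\<^sub>R q)))\<^sup>2" by (rule pmin)
    also have "x - ((1 - t) *\<^sub>R p + t *\<^sub>R q) = (x - p) - t *\<^sub>R (q - p)"
      by (simp add: algebra_simps)
    also have "(norm ((x - p) - t *\<^sub>R (q - p)))\<^sup>2 = (norm (x - p))\<^sup>2 - 2 * (t * r) + t\<^sup>2 * v"
      by (simp add: norm_diff_sq cinner_scaleR_right r_def v_def power_mult_distrib)
    finally have "2 * (t * r) \<le> t\<^sup>2 * v" by simp
    then have "2 * r \<le> t * v" using t0 by (simp add: power2_eq_square)
    moreover have "t * v < r"
    proof -
      have "t * v = r * v / (v + r + 1)" by (simp add: t_def)
      also have "\<dots> < r" using r v0 by (simp add: field_simps add_pos_pos)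
      finally show ?thesis .
    qed
    ultimately show False using r by linarith
  qed
  then show ?thesis using pM by blast
qed

lemma proj_orth:
  fixes M :: "'a::chilbert_space set"
  assumes "closed M" "convex M" "M \<noteq> {}"
    and shift: "\<And>m c b. m \<in> M \<Longrightarrow> b \<in> B \<Longrightarrow> m + scaleC c b \<in> M"
  shows "\<exists>p\<in>M. \<forall>b\<in>B. cinner (x - p) b = 0"
proof -
  obtain p where pM: "p \<in> M" and var: "\<forall>m\<in>M. Re (cinner (x - p) (m - p)) \<le> 0"
    using proj_exists[OF assms(1-3)] by blast
  have "cinner (x - p) b = 0" if "b \<in> B" for b
  proof (rule zero_from_var)
    fix c
    have "Re (cinner (x - p) ((p + scaleC c b) - p)) \<le> 0"
      using var shift[OF pM that] by blast
    then show "Re (c * cinner (x - p) b) \<le> 0" by (simp add: cinner_scaleC_right)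
  qed
  then show ?thesis using pM by blast
qed


section \<open>Bounded complex-linear operators\<close>

lemma bclin_add: "bounded_clinear T \<Longrightarrow> T (x + y) = T x + T y"
  unfolding bounded_clinear_def by blast

lemma bclin_scaleC: "bounded_clinear T \<Longrightarrow> T (scaleC c x) = scaleC c (T x)"
  unfolding bounded_clinear_def by blast

lemma bclin_zero: "bounded_clinear T \<Longrightarrow> T 0 = 0"
  using bclin_scaleC[of T 0 0] by simp

lemma bclin_minus: "bounded_clinear T \<Longrightarrow> T (- x) = - T x"
  using bclin_scaleC[of T "-1" x] by (simp add: scaleC_minus_left scaleC_one)

lemma bclin_diff: "bounded_clinear T \<Longrightarrow> T (x - y) = T x - T y"
  by (simp only: diff_conv_add_uminus bclin_add bclin_minus)

lemma bclin_bound: "bounded_clinear T \<Longrightarrow> \<exists>K>0. \<forall>x. norm (T x) \<le> norm x * K"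
proof -
  assume "bounded_clinear T"
  then obtain K where K: "\<And>x. norm (T x) \<le> norm x * K" unfolding bounded_clinear_def by blast
  have "norm (T x) \<le> norm x * (\<bar>K\<bar> + 1)" for x
  proof -
    have "norm x * K \<le> norm x * (\<bar>K\<bar> + 1)" by (intro mult_left_mono) auto
    then show ?thesis using K[of x] by linarith
  qed
  then show ?thesis by (intro exI[of _ "\<bar>K\<bar> + 1"]) auto
qed

lemma bclin_linear: "bounded_clinear T \<Longrightarrow> bounded_linear T"
proof -
  assume T: "bounded_clinear T"
  then obtain K where K: "\<And>x. norm (T x) \<le> norm x * K" unfolding bounded_clinear_def by blast
  show ?thesis
  proof (rule bounded_linear_intro[where K=K])
    show "T (x + y) = T x + T y" for x y using T by (rule bclin_add)
    show "T (scaleR r x) = scaleR r (T x)" for r x using T by (simp add: scaleR_scaleC bclin_scaleC)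
    show "norm (T x) \<le> norm x * K" for x by (rule K)
  qed
qed

lemma bclin_comp: "bounded_clinear S \<Longrightarrow> bounded_clinear T \<Longrightarrow> bounded_clinear (\<lambda>x. S (T x))"
proof -
  assume S: "bounded_clinear S" and T: "bounded_clinear T"
  obtain K1 where K1: "K1 > 0" "\<And>x. norm (S x) \<le> norm x * K1" using bclin_bound[OF S] by blast
  obtain K2 where K2: "K2 > 0" "\<And>x. norm (T x) \<le> norm x * K2" using bclin_bound[OF T] by blast
  have "norm (S (T x)) \<le> norm x * (K2 * K1)" for x
  proof -
    have "norm (S (T x)) \<le> norm (T x) * K1" by (rule K1)
    also have "\<dots> \<le> (norm x * K2) * K1" using K1(1) K2(2) by (intro mult_right_mono) auto
    finally show ?thesis by (simp add: mult.assoc)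
  qed
  then show ?thesis unfolding bounded_clinear_def using S T
    by (auto simp: bclin_add bclin_scaleC)
qed

lemma bclin_comp': "bounded_clinear S \<Longrightarrow> bounded_clinear T \<Longrightarrow> bounded_clinear (S \<circ> T)"
  using bclin_comp[of S T] by (simp add: comp_def)

lemma bclin_funpow:
  fixes T :: "'a::complex_inner \<Rightarrow> 'a"
  shows "bounded_clinear T \<Longrightarrow> bounded_clinear (T ^^ n)"
proof (induction n)
  case 0
  have "bounded_clinear (\<lambda>x::'a. x)" unfolding bounded_clinear_def
    by (auto intro!: exI[of _ 1])
  moreover have "T ^^ 0 = (\<lambda>x. x)" by (rule ext) simp
  ultimately show ?case by simp
next
  case (Suc n)
  then show ?case using bclin_comp[of T "T ^^ n"] by simp
qed

section \<open>Riesz representation and adjoints\<close>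

lemma riesz:
  fixes f :: "'a::chilbert_space \<Rightarrow> complex"
  assumes add: "\<And>x y. f (x + y) = f x + f y"
    and sc: "\<And>c x. f (scaleC c x) = c * f x"
    and bd: "\<And>x. cmod (f x) \<le> norm x * K"
  shows "\<exists>z. \<forall>y. cinner z y = f y"
proof (cases "\<forall>y. f y = 0")
  case True
  then show ?thesis by (intro exI[of _ 0]) simp
next
  case False
  then obtain y0 where y0: "f y0 \<noteq> 0" by blast
  have f0: "f 0 = 0" using sc[of 0 0] by simp
  have fdiff: "f (a - b) = f a - f b" for a b
  proof -
    have "f (a - b) + f b = f a" using add[of "a - b" b] by simp
    then show ?thesis by (simp add: eq_diff_eq)
  qed
  have bl: "bounded_linear f"
  proof (rule bounded_linear_intro[where K=K])
    show "f (x + y) = f x + f y" for x y by (rule add)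
    show "f (scaleR r x) = scaleR r (f x)" for r x by (simp add: scaleR_scaleC sc scaleR_conv_of_real)
    show "norm (f x) \<le> norm x * K" for x using bd by simp
  qed
  define N where "N = {y. f y = 0}"
  have clN: "closed N" unfolding N_def
    by (rule closed_Collect_eq) (auto intro: linear_continuous_on[OF bl])
  have cvN: "convex N" unfolding N_def convex_def
    by (auto simp: add scaleR_scaleC sc)
  have neN: "N \<noteq> {}" using f0 N_def by blast
  have shift: "m + scaleC c b \<in> N" if "m \<in> N" "b \<in> N" for m c b
    using that by (simp add: N_def add sc)
  obtain p where pN: "p \<in> N" and orth: "\<forall>b\<in>N. cinner (y0 - p) b = 0"
    using proj_orth[OF clN cvN neN, of N y0] shift by blast
  define w where "w = y0 - p"
  have fw: "f w = f y0" using pN by (simp add: w_def fdiff N_def)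
  then have "w \<noteq> 0" using y0 f0 by auto
  then have ww: "cinner w w \<noteq> 0" by (simp add: cinner_eq_zero_iff)
  have wy: "cinner w y = (f y / f w) * cinner w w" for y
  proof -
    have "y - scaleC (f y / f w) w \<in> N"
    proof -
      have "f (y - scaleC (f y / f w) w) = f y - (f y / f w) * f w" by (simp only: fdiff sc)
      also have "\<dots> = 0" using y0 fw by simp
      finally show ?thesis by (simp add: N_def)
    qed
    then have "cinner w (y - scaleC (f y / f w) w) = 0" using orth w_def by blast
    then have "cinner w y - (f y / f w) * cinner w w = 0" by (simp only: cinner_diff_right cinner_scaleC_right)
    then show ?thesis by (simp only: right_minus_eq)
  qed
  define z where "z = scaleC (cnj (f w / cinner w w)) w"
  have "cinner z y = f y" for y
  proof -
    have "cinner z y = (f w / cinner w w) * cinner w y" by (simp add: z_def cinner_scaleC_left)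
    also have "\<dots> = (f w / cinner w w) * ((f y / f w) * cinner w w)" by (simp only: wy[of y])
    also have "\<dots> = f y" using ww y0 fw by (simp add: field_simps)
    finally show ?thesis .
  qed
  then show ?thesis by blast
qed

lemma adj_exists:
  fixes T :: "'a::chilbert_space \<Rightarrow> 'a"
  assumes T: "bounded_clinear T"
  shows "\<exists>S. \<forall>x y. cinner (S x) y = cinner x (T y)"
proof -
  obtain K where K: "K > 0" "\<And>x. norm (T x) \<le> norm x * K" using bclin_bound[OF T] by blast
  have "\<exists>z. \<forall>y. cinner z y = cinner x (T y)" for x
  proof (rule riesz[where K="norm x * K"])
    show "cinner x (T (a + b)) = cinner x (T a) + cinner x (T b)" for a b
      using T by (simp add: bclin_add cinner_add_right)
    show "cinner x (T (scaleC c a)) = c * cinner x (T a)" for c a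
      using T by (simp add: bclin_scaleC cinner_scaleC_right)
    show "cmod (cinner x (T y)) \<le> norm y * (norm x * K)" for y
    proof -
      have "cmod (cinner x (T y)) \<le> norm x * norm (T y)" by (rule Cauchy_Schwarz)
      also have "\<dots> \<le> norm x * (norm y * K)" by (intro mult_left_mono K) auto
      finally show ?thesis by (simp add: algebra_simps)
    qed
  qed
  then show ?thesis by metis
qed

lemma adj_prop:
  fixes T :: "'a::chilbert_space \<Rightarrow> 'a"
  assumes "bounded_clinear T"
  shows "cinner (adj T x) y = cinner x (T y)"
proof -
  have "\<forall>x y. cinner (adj T x) y = cinner x (T y)"
    unfolding adj_def using adj_exists[OF assms] by (rule someI_ex)
  then show ?thesis by blast
qed

lemma adj_prop':
  fixes T :: "'a::chilbert_space \<Rightarrow> 'a"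
  assumes "bounded_clinear T"
  shows "cinner y (adj T x) = cinner (T y) x"
  using adj_prop[OF assms, of x y] cinner_commute[of y "adj T x"] cinner_commute[of "T y" x] by simp

lemma adj_unique:
  fixes T :: "'a::chilbert_space \<Rightarrow> 'a"
  assumes "bounded_clinear T" and "\<And>x y. cinner (S x) y = cinner x (T y)"
  shows "adj T = S"
proof
  fix x show "adj T x = S x"
    by (rule cinner_ext) (simp add: adj_prop[OF assms(1)] assms(2))
qed

lemma bclin_adj:
  fixes T :: "'a::chilbert_space \<Rightarrow> 'a"
  assumes T: "bounded_clinear T"
  shows "bounded_clinear (adj T)"
proof -
  obtain K where K: "K > 0" "\<And>x. norm (T x) \<le> norm x * K" using bclin_bound[OF T] by blast
  have a: "adj T (x + y) = adj T x + adj T y" for x y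
    by (rule cinner_ext) (simp add: adj_prop[OF T] cinner_add_left)
  have s: "adj T (scaleC c x) = scaleC c (adj T x)" for c x
    by (rule cinner_ext) (simp add: adj_prop[OF T] cinner_scaleC_left)
  have b: "norm (adj T x) \<le> norm x * K" for x
  proof -
    have "(norm (adj T x))\<^sup>2 = Re (cinner x (T (adj T x)))"
      by (simp add: norm_sq_cinner adj_prop[OF T])
    also have "\<dots> \<le> cmod (cinner x (T (adj T x)))" by (rule complex_Re_le_cmod)
    also have "\<dots> \<le> norm x * norm (T (adj T x))" by (rule Cauchy_Schwarz)
    also have "\<dots> \<le> norm x * (norm (adj T x) * K)" by (intro mult_left_mono K) auto
    finally have h: "(norm (adj T x))\<^sup>2 \<le> norm (adj T x) * (norm x * K)" by (simp add: algebra_simps)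
    show ?thesis
    proof (cases "norm (adj T x) = 0")
      case True then show ?thesis using K by simp
    next
      case False
      then have "norm (adj T x) > 0" by simp
      then show ?thesis using h by (simp add: power2_eq_square)
    qed
  qed
  show ?thesis unfolding bounded_clinear_def using a s b by blast
qed

lemma adj_comp:
  fixes S T :: "'a::chilbert_space \<Rightarrow> 'a"
  assumes "bounded_clinear S" "bounded_clinear T"
  shows "adj (S \<circ> T) = (\<lambda>x. adj T (adj S x))"
  by (rule adj_unique[OF bclin_comp'[OF assms]]) (simp add: adj_prop assms)

lemma iso_bclin: "isometry V \<Longrightarrow> bounded_clinear V"
  unfolding isometry_def by blast

lemma iso_inner:
  fixes V :: "'a::complex_inner \<Rightarrow> 'a"
  assumes V: "isometry V"
  shows "cinner (V x) (V y) = cinner x y"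
proof -
  have T: "bounded_clinear V" and n: "\<And>x. norm (V x) = norm x" using V unfolding isometry_def by auto
  have re: "Re (cinner (V a) (V b)) = Re (cinner a b)" for a b
  proof -
    have "(norm (V (a + b)))\<^sup>2 = (norm (a + b))\<^sup>2" by (simp add: n)
    then have "(norm (V a + V b))\<^sup>2 = (norm (a + b))\<^sup>2" by (simp add: bclin_add[OF T])
    then show ?thesis by (simp add: norm_add_sq n)
  qed
  have "Im (cinner (V x) (V y)) = Re (cinner (V x) (V (scaleC (- \<i>) y)))"
    by (simp add: bclin_scaleC[OF T] cinner_scaleC_right)
  also have "\<dots> = Re (cinner x (scaleC (- \<i>) y))" by (rule re)
  also have "\<dots> = Im (cinner x y)" by (simp add: cinner_scaleC_right)
  finally show ?thesis using re[of x y] by (simp add: complex_eq_iff)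
qed

lemma iso_adj:
  fixes V :: "'a::chilbert_space \<Rightarrow> 'a"
  assumes V: "isometry V"
  shows "adj V (V x) = x"
  by (rule cinner_ext) (simp add: adj_prop[OF iso_bclin[OF V]] iso_inner[OF V])


lemma bclin_id: "bounded_clinear (\<lambda>x::'a::complex_inner. x)"
  unfolding bounded_clinear_def by (auto intro!: exI[of _ 1])

lemma bclin_plus: "bounded_clinear S \<Longrightarrow> bounded_clinear T \<Longrightarrow> bounded_clinear (\<lambda>x. S x + T x)"
proof -
  assume S: "bounded_clinear S" and T: "bounded_clinear T"
  obtain K1 where K1: "K1 > 0" "\<And>x. norm (S x) \<le> norm x * K1" using bclin_bound[OF S] by blast
  obtain K2 where K2: "K2 > 0" "\<And>x. norm (T x) \<le> norm x * K2" using bclin_bound[OF T] by blast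
  have "norm (S x + T x) \<le> norm x * (K1 + K2)" for x
    using norm_triangle_ineq[of "S x" "T x"] K1(2)[of x] K2(2)[of x] by (simp add: algebra_simps)
  then have bd: "\<exists>K. \<forall>x. norm (S x + T x) \<le> norm x * K" by blast
  show ?thesis unfolding bounded_clinear_def
  proof (intro conjI allI bd)
    show "S (x + y) + T (x + y) = S x + T x + (S y + T y)" for x y using S T by (simp add: bclin_add algebra_simps)
    show "S (scaleC c x) + T (scaleC c x) = scaleC c (S x + T x)" for c x using S T by (simp add: bclin_scaleC scaleC_add_right)
  qed
qed

lemma bclin_minus_op: "bounded_clinear S \<Longrightarrow> bounded_clinear T \<Longrightarrow> bounded_clinear (\<lambda>x. S x - T x)"
proof -
  assume S: "bounded_clinear S" and T: "bounded_clinear T"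
  have "bounded_clinear (\<lambda>x. - T x)" unfolding bounded_clinear_def
  proof (intro conjI allI)
    show "- T (x + y) = - T x + - T y" for x y using T by (simp add: bclin_add)
    show "- T (scaleC c x) = scaleC c (- T x)" for c x using T by (simp add: bclin_scaleC scaleC_minus_right)
    show "\<exists>K. \<forall>x. norm (- T x) \<le> norm x * K" using T unfolding bounded_clinear_def by simp
  qed
  from bclin_plus[OF S this] show ?thesis by simp
qed

lemma adj_comm:
  fixes A B :: "'a::chilbert_space \<Rightarrow> 'a"
  assumes A: "bounded_clinear A" and B: "bounded_clinear B" and c: "\<And>u. A (B u) = B (A u)"
  shows "adj A (adj B x) = adj B (adj A x)"
  by (rule cinner_ext) (simp add: adj_prop A B bclin_adj c)

lemma defect_sym:
  fixes A B :: "'a::chilbert_space \<Rightarrow> 'a"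
  assumes A: "isometry A" and B: "isometry B" and c: "A \<circ> B = B \<circ> A"
  shows "defect B A = defect A B"
proof -
  have c': "A (B u) = B (A u)" for u using fun_cong[OF c, of u] by simp
  have "adj A (adj B x) = adj B (adj A x)" for x
    by (rule adj_comm) (use A B c' iso_bclin in auto)
  then show ?thesis unfolding defect_def using c' by (auto simp: algebra_simps)
qed

lemma pos_key:
  fixes A B :: "'a::chilbert_space \<Rightarrow> 'a"
  assumes A: "isometry A" and B: "isometry B" and c: "A \<circ> B = B \<circ> A"
    and pos: "positive_op (defect A B)"
  shows "defect A B (defect A B x) = defect A B x"
    and "adj B (defect A B x) = 0"
    and "adj B (A (y - B (adj B y))) = 0"
    and "cinner (defect A B x) z = cinner x (defect A B z)"
proof -
  have Ab: "bounded_clinear A" and Bb: "bounded_clinear B" using A B iso_bclin by auto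
  define a where "a = adj A"
  define b where "b = adj B"
  have ab: "bounded_clinear a" and bb: "bounded_clinear b" using bclin_adj Ab Bb a_def b_def by auto
  define R where "R x = x - B (b x)" for x
  define Q where "Q x = A (R (a x))" for x
  define C where "C = defect A B"
  have CRQ: "C x = R x - Q x" for x
    by (simp add: C_def defect_def R_def Q_def a_def b_def bclin_diff[OF Ab] bclin_diff[OF Bb] algebra_simps)
  have Rdiff: "R (x - y) = R x - R y" for x y
    by (simp add: R_def bclin_diff[OF Ab] bclin_diff[OF Bb] bclin_diff[OF bb])
  have Qdiff: "Q (x - y) = Q x - Q y" for x y
    by (simp add: Q_def Rdiff bclin_diff[OF Ab] bclin_diff[OF ab])
  have bB: "b (B u) = u" for u by (simp add: b_def iso_adj[OF B])
  have bR: "b (R x) = 0" for x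
    by (simp add: R_def bclin_diff[OF bb] bB)
  have RR: "R (R x) = R x" for x
    using bR[of x] by (simp add: R_def bclin_zero[OF Bb])
  have Rsa: "cinner (R x) y = cinner x (R y)" for x y
  proof -
    have 1: "cinner (B (b x)) y = cinner (b x) (b y)" by (simp add: b_def adj_prop'[OF Bb, symmetric])
    have 2: "cinner x (B (b y)) = cinner (b x) (b y)" by (simp add: b_def adj_prop[OF Bb, symmetric])
    show ?thesis by (simp add: R_def cinner_diff_left cinner_diff_right 1 2)
  qed
  have Qsa: "cinner (Q x) y = cinner x (Q y)" for x y
  proof -
    have "cinner (Q x) y = cinner (R (a x)) (a y)" by (simp add: Q_def a_def adj_prop'[OF Ab, symmetric])
    also have "\<dots> = cinner (a x) (R (a y))" by (rule Rsa)
    also have "\<dots> = cinner x (Q y)" by (simp add: Q_def a_def adj_prop[OF Ab])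
    finally show ?thesis .
  qed
  have Csa: "cinner (C x) y = cinner x (C y)" for x y
    by (simp add: CRQ cinner_diff_left cinner_diff_right Rsa Qsa)
  have Q0: "Q x = 0" if Rx: "R x = 0" for x
  proof -
    have "cinner x (Q x) = cinner (a x) (R (a x))"
      by (simp add: Q_def a_def adj_prop[OF Ab])
    also have "\<dots> = cinner (R (a x)) (R (a x))" by (simp add: Rsa[symmetric] RR)
    finally have e: "Re (cinner x (Q x)) = (norm (R (a x)))\<^sup>2" by (simp add: norm_sq_cinner)
    have "cinner x (C x) = cinner x (R x) - cinner x (Q x)" by (simp add: CRQ cinner_diff_right)
    then have "Re (cinner x (C x)) = - (norm (R (a x)))\<^sup>2" using Rx e by simp
    moreover have "0 \<le> Re (cinner x (C x))" using pos unfolding positive_op_def C_def by blast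
    ultimately have "R (a x) = 0" by simp
    then show ?thesis by (simp add: Q_def bclin_zero[OF Ab])
  qed
  have QR: "Q x = Q (R x)" for x
  proof -
    have "R (x - R x) = 0" by (simp add: Rdiff RR)
    then have "Q (x - R x) = 0" by (rule Q0)
    then show ?thesis by (simp add: Qdiff)
  qed
  have RQ: "R (Q x) = Q x" for x
    by (rule cinner_ext) (simp add: Rsa Qsa QR[symmetric])
  have QQ: "Q (Q x) = Q x" for x
    by (simp add: Q_def a_def iso_adj[OF A] RR)
  show "defect A B (defect A B x) = defect A B x"
    using RQ QQ QR[symmetric] by (simp add: C_def[symmetric] CRQ Rdiff Qdiff RR)
  show "adj B (defect A B x) = 0"
    using RQ[of x] bR[of "Q x"] bR[of x]
    by (simp add: C_def[symmetric] b_def[symmetric] CRQ bclin_diff[OF bb])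
  show "cinner (defect A B x) z = cinner x (defect A B z)" using Csa by (simp add: C_def)
  have "Q (A y) = A (R y)" by (simp add: Q_def a_def iso_adj[OF A])
  then have "R (A (R y)) = A (R y)" using RQ[of "A y"] by simp
  then have "b (A (R y)) = 0" using bR[of "A (R y)"] by simp
  then show "adj B (A (y - B (adj B y))) = 0" by (simp add: b_def R_def)
qed


lemma cinner_sum_left: "cinner (sum g F) (y::'a::complex_inner) = (\<Sum>i\<in>F. cinner (g i) y)"
  by (induction F rule: infinite_finite_induct) (simp_all add: cinner_add_left)

lemma cinner_sum_right: "cinner (y::'a::complex_inner) (sum g F) = (\<Sum>i\<in>F. cinner y (g i))"
  by (induction F rule: infinite_finite_induct) (simp_all add: cinner_add_right)

lemma pythag:
  fixes g :: "'i \<Rightarrow> 'a::complex_inner"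
  assumes orth: "\<And>i j. i \<in> F \<Longrightarrow> j \<in> F \<Longrightarrow> i \<noteq> j \<Longrightarrow> cinner (g i) (g j) = 0"
  shows "(norm (sum g F))\<^sup>2 = (\<Sum>i\<in>F. (norm (g i))\<^sup>2)"
proof (cases "finite F")
  case False then show ?thesis by simp
next
  case True
  have "cinner (sum g F) (sum g F) = (\<Sum>j\<in>F. \<Sum>i\<in>F. cinner (g i) (g j))"
    by (simp add: cinner_sum_left cinner_sum_right)
  also have "\<dots> = (\<Sum>j\<in>F. \<Sum>i\<in>F. if i = j then cinner (g j) (g j) else 0)"
    by (intro sum.cong refl) (use orth in auto)
  also have "\<dots> = (\<Sum>j\<in>F. cinner (g j) (g j))"
    using True by simp
  finally have "Re (cinner (sum g F) (sum g F)) = (\<Sum>i\<in>F. Re (cinner (g i) (g i)))"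
    by simp
  then show ?thesis by (simp add: norm_sq_cinner)
qed

lemma orth_summable:
  fixes g :: "'i \<Rightarrow> 'a::chilbert_space"
  assumes orth: "\<And>i j. i \<noteq> j \<Longrightarrow> cinner (g i) (g j) = 0"
    and sm: "(\<lambda>i. (norm (g i))\<^sup>2) summable_on A"
  shows "g summable_on A"
proof -
  define h where "h i = (norm (g i))\<^sup>2" for i
  from sm obtain L where lim: "(sum h \<longlongrightarrow> L) (finite_subsets_at_top A)"
    unfolding has_sum_def summable_on_def h_def by blast
  have nsum: "norm (sum g F) = sqrt (sum h F)" for F
    using pythag[of F g] orth by (simp add: h_def real_sqrt_unique)
  have hnn: "h i \<ge> 0" for i by (simp add: h_def)
  have "\<exists>P. eventually P (finite_subsets_at_top A) \<and>
              (\<forall>F F'. P F \<and> P F' \<longrightarrow> dist (sum g F) (sum g F') < e)" if "e>0" for e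
  proof -
    define d P where "d = e\<^sup>2/16" and "P F \<longleftrightarrow> finite F \<and> F \<subseteq> A \<and> dist (sum h F) L < d" for F
    have "d > 0" using that by (simp add: d_def)
    have ev_P: "eventually P (finite_subsets_at_top A)"
      using lim
      by (auto simp add: P_def[abs_def] \<open>0 < d\<close> eventually_conj_iff eventually_finite_subsets_at_top_weakI tendsto_iff)
    moreover have "dist (sum g F1) (sum g F2) < e" if "P F1" and "P F2" for F1 F2
    proof -
      from ev_P
      obtain F' where "finite F'" and "F' \<subseteq> A" and P_sup_F': "finite F \<and> F \<supseteq> F' \<and> F \<subseteq> A \<Longrightarrow> P F" for F
        by atomize_elim (simp add: eventually_finite_subsets_at_top)
      define F where "F = F' \<union> F1 \<union> F2"
      have "finite F" and "F \<subseteq> A"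
        using F_def P_def[abs_def] that \<open>finite F'\<close> \<open>F' \<subseteq> A\<close> by auto
      have dist_F: "dist (sum h F) L < d"
        by (metis F_def \<open>F \<subseteq> A\<close> P_def P_sup_F' \<open>finite F\<close> le_supE order_refl)
      have dist_F_subset: "dist (sum g F) (sum g F') < e/2" if F': "F' \<subseteq> F" "P F'" for F'
      proof -
        have "dist (sum g F) (sum g F') = norm (sum g (F-F'))"
          unfolding dist_norm using \<open>finite F\<close> F' by (subst sum_diff) auto
        also have "\<dots> = sqrt (sum h (F - F'))" by (rule nsum)
        also have "sum h (F - F') = sum h F - sum h F'"
          using \<open>finite F\<close> F' by (subst sum_diff) auto
        also have "sum h F - sum h F' < 2 * d"
          using dist_F F' unfolding P_def dist_norm real_norm_def by linarith
        then have "sqrt (sum h F - sum h F') < sqrt (2 * d)" 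
          using real_sqrt_less_iff by blast
        also have "sqrt (2 * d) \<le> e / 2"
        proof -
          have "2 * d \<le> (e/2)\<^sup>2" using \<open>e > 0\<close> by (simp add: d_def power_divide)
          then have "sqrt (2 * d) \<le> sqrt ((e/2)\<^sup>2)" by (rule real_sqrt_le_mono)
          also have "sqrt ((e/2)\<^sup>2) = e/2" using \<open>e > 0\<close> by simp
          finally show ?thesis .
        qed
        finally show ?thesis by simp
      qed
      have "dist (sum g F1) (sum g F2) \<le> dist (sum g F) (sum g F1) + dist (sum g F) (sum g F2)"
        by (rule dist_triangle3)
      also have "\<dots> < e/2 + e/2"
        by (intro add_strict_mono dist_F_subset that) (auto simp: F_def)
      also have "\<dots> \<le> e" by simp
      finally show "dist (sum g F1) (sum g F2) < e" .
    qed
    ultimately show ?thesis by blast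
  qed
  then have "cauchy_filter (filtermap (sum g) (finite_subsets_at_top A))"
    by (simp add: cauchy_filter_metric_filtermap)
  moreover have "complete (UNIV::'a set)"
    by (meson Cauchy_convergent UNIV_I complete_def convergent_def)
  ultimately obtain L' where "(sum g \<longlongrightarrow> L') (finite_subsets_at_top A)"
    using complete_uniform[where S=UNIV] by (force simp add: filterlim_def)
  then show ?thesis
    using summable_on_def has_sum_def by blast
qed

lemma orth_has_sum_norm:
  fixes g :: "'i \<Rightarrow> 'a::chilbert_space"
  assumes orth: "\<And>i j. i \<noteq> j \<Longrightarrow> cinner (g i) (g j) = 0"
    and sm: "(\<lambda>i. (norm (g i))\<^sup>2) summable_on A"
  shows "((\<lambda>i. (norm (g i))\<^sup>2) has_sum (norm (infsum g A))\<^sup>2) A"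
proof -
  have "g summable_on A" by (rule orth_summable[OF orth sm])
  then have "(sum g \<longlongrightarrow> infsum g A) (finite_subsets_at_top A)"
    by (rule infsum_tendsto)
  then have "((\<lambda>F. (norm (sum g F))\<^sup>2) \<longlongrightarrow> (norm (infsum g A))\<^sup>2) (finite_subsets_at_top A)"
    by (intro tendsto_intros)
  moreover have "(norm (sum g F))\<^sup>2 = (\<Sum>i\<in>F. (norm (g i))\<^sup>2)" for F
    by (rule pythag) (use orth in auto)
  ultimately show ?thesis unfolding has_sum_def by simp
qed


lemma cinner_ext_in':
  assumes "csubspace S" "a \<in> S" "b \<in> S" "\<And>y. y \<in> S \<Longrightarrow> cinner y a = cinner y (b::'a::complex_inner)"
  shows "a = b"
proof (rule cinner_ext_in[OF assms(1-3)])
  fix y assume "y \<in> S"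
  then have "cinner y a = cinner y b" by (rule assms(4))
  then show "cinner a y = cinner b y" by (metis cinner_commute)
qed

lemma csubspace_diff: "csubspace S \<Longrightarrow> x \<in> S \<Longrightarrow> y \<in> S \<Longrightarrow> x - y \<in> (S::'a::complex_vector set)"
proof -
  assume S: "csubspace S" and x: "x \<in> S" and y: "y \<in> S"
  have "scaleC (-1) y \<in> S" using S y unfolding csubspace_def by blast
  then have "x + scaleC (-1) y \<in> S" using S x unfolding csubspace_def by blast
  then show "x - y \<in> S" by (simp add: scaleC_minus_left scaleC_one)
qed

lemma orth_compl_csubspace: "csubspace (orth_compl (S::'a::complex_inner set))"
  unfolding csubspace_def orth_compl_def by (simp add: cinner_add_right cinner_scaleC_right)

lemma orth_compl_closed: "closed (orth_compl (S::'a::complex_inner set))"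
proof -
  have "orth_compl S = (\<Inter>s\<in>S. {y. cinner s y = 0})" unfolding orth_compl_def by auto
  moreover have "closed {y. cinner s y = 0}" for s
    by (rule closed_Collect_eq) (auto intro: linear_continuous_on bounded_linear_cinner_right)
  ultimately show ?thesis by auto
qed

lemma orth_compl_closed_csubspace: "closed_csubspace (orth_compl (S::'a::complex_inner set))"
  unfolding closed_csubspace_def using orth_compl_csubspace orth_compl_closed by blast

lemma subset_orth_orth: "S \<subseteq> orth_compl (orth_compl (S::'a::complex_inner set))"
  unfolding orth_compl_def by (auto, metis cinner_commute complex_cnj_zero)

lemma adj_on_eq:
  fixes T :: "'a::chilbert_space \<Rightarrow> 'a"
  assumes P: "csubspace P" and T: "bounded_clinear T" and inv: "\<And>x. x \<in> P \<Longrightarrow> adj T x \<in> P"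
    and x: "x \<in> P"
  shows "adj_on P T x = adj T x"
proof -
  have ex: "\<exists>A. (\<forall>x\<in>P. A x \<in> P) \<and> (\<forall>x\<in>P. \<forall>y\<in>P. cinner (A x) y = cinner x (T y))"
    using inv adj_prop[OF T] by blast
  have hprop: "(\<forall>x\<in>P. adj_on P T x \<in> P) \<and> (\<forall>x\<in>P. \<forall>y\<in>P. cinner (adj_on P T x) y = cinner x (T y))"
    unfolding adj_on_def by (rule someI_ex[OF ex])
  show ?thesis
  proof (rule cinner_ext_in[OF P])
    show "adj_on P T x \<in> P" using hprop x by blast
    show "adj T x \<in> P" using inv x by blast
    show "cinner (adj_on P T x) y = cinner (adj T x) y" if "y \<in> P" for y
      using hprop x that by (simp add: adj_prop[OF T])
  qed
qed

lemma pow_adj: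
  fixes T :: "'a::chilbert_space \<Rightarrow> 'a"
  assumes T: "bounded_clinear T"
  shows "cinner ((T ^^ m) v) x = cinner v ((adj T ^^ m) x)"
proof (induction m arbitrary: v x)
  case 0 then show ?case by simp
next
  case (Suc m)
  have "cinner ((T ^^ Suc m) v) x = cinner (T ((T ^^ m) v)) x" by simp
  also have "\<dots> = cinner ((T ^^ m) v) (adj T x)" by (simp add: adj_prop'[OF T, symmetric])
  also have "\<dots> = cinner v ((adj T ^^ m) (adj T x))" by (rule Suc)
  also have "\<dots> = cinner v ((adj T ^^ Suc m) x)" by (simp add: funpow_Suc_right del: funpow.simps)
  finally show ?case .
qed

lemma pow_iso:
  fixes T :: "'a::chilbert_space \<Rightarrow> 'a"
  assumes T: "isometry T"
  shows "cinner ((T ^^ m) u) ((T ^^ m) v) = cinner u v"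
  by (induction m) (simp_all add: iso_inner[OF T])

lemma has_sum_single: "((\<lambda>j. if j = k then v else 0) has_sum v) UNIV"
proof -
  have "((\<lambda>j. if j = k then v else 0) has_sum (\<Sum>j\<in>{k}. if j = k then v else 0)) {k}"
    by (rule has_sum_finite) simp
  then have "((\<lambda>j. if j = k then v else 0) has_sum v) {k}" by simp
  then show ?thesis by (subst has_sum_cong_neutral[where T="{k}" and g="\<lambda>j. if j = k then v else 0"]) auto
qed

section \<open>Orthonormal bases\<close>

lemma cspan_0: "0 \<in> cspan B"
  unfolding cspan_def by (rule CollectI, rule exI[of _ "{}"]) simp

lemma scaleC_sum: "scaleC a (sum g F) = (\<Sum>i\<in>F. scaleC a (g i :: 'a::complex_vector))"
  by (induction F rule: infinite_finite_induct) (simp_all add: scaleC_add_right)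

lemma cspan_add: "x \<in> cspan B \<Longrightarrow> y \<in> cspan B \<Longrightarrow> x + y \<in> cspan (B::'a::complex_vector set)"
proof -
  assume "x \<in> cspan B" "y \<in> cspan B"
  then obtain F1 c1 F2 c2 where F1: "finite F1" "F1 \<subseteq> B" "x = (\<Sum>b\<in>F1. scaleC (c1 b) b)"
    and F2: "finite F2" "F2 \<subseteq> B" "y = (\<Sum>b\<in>F2. scaleC (c2 b) b)"
    unfolding cspan_def by blast
  define F where "F = F1 \<union> F2"
  define c where "c b = (if b \<in> F1 then c1 b else 0) + (if b \<in> F2 then c2 b else 0)" for b
  have fin: "finite F" using F1 F2 by (simp add: F_def)
  have e1: "(\<Sum>b\<in>F. scaleC (if b \<in> F1 then c1 b else 0) b) = x"
    unfolding F1(3) F_def by (rule sum.mono_neutral_cong_right) (use F1 F2 in auto)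
  have e2: "(\<Sum>b\<in>F. scaleC (if b \<in> F2 then c2 b else 0) b) = y"
    unfolding F2(3) F_def by (rule sum.mono_neutral_cong_right) (use F1 F2 in auto)
  have eq: "(\<Sum>b\<in>F. scaleC (c b) b) = x + y"
    unfolding c_def scaleC_add_left sum.distrib e1 e2 ..
  have sub: "F \<subseteq> B" using F1(2) F2(2) by (simp add: F_def)
  show ?thesis unfolding cspan_def
    by (rule CollectI, rule exI[of _ F], rule exI[of _ c]) (simp only: fin sub eq simp_thms)
qed

lemma cspan_scaleC: "x \<in> cspan B \<Longrightarrow> scaleC a x \<in> cspan (B::'a::complex_vector set)"
proof -
  assume "x \<in> cspan B"
  then obtain F c where F: "finite F" "F \<subseteq> B" "x = (\<Sum>b\<in>F. scaleC (c b) b)"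
    unfolding cspan_def by blast
  have eq: "scaleC a x = (\<Sum>b\<in>F. scaleC (a * c b) b)" unfolding F(3) scaleC_sum scaleC_scaleC ..
  show ?thesis unfolding cspan_def
    by (rule CollectI, rule exI[of _ F], rule exI[of _ "\<lambda>b. a * c b"]) (simp only: F(1,2) eq simp_thms)
qed

lemma cspan_base: "b \<in> B \<Longrightarrow> b \<in> cspan (B::'a::complex_vector set)"
  unfolding cspan_def by (rule CollectI, rule exI[of _ "{b}"], rule exI[of _ "\<lambda>_. 1"]) (simp add: scaleC_one)

lemma cspan_subset:
  assumes L: "csubspace L" and B: "B \<subseteq> (L::'a::complex_vector set)"
  shows "cspan B \<subseteq> L"
proof
  fix x assume "x \<in> cspan B"
  then obtain F c where F: "finite F" "F \<subseteq> B" "x = (\<Sum>b\<in>F. scaleC (c b) b)"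
    unfolding cspan_def by blast
  have "(\<Sum>b\<in>F. scaleC (c b) b) \<in> L" using F(1,2)
  proof (induction F rule: finite_induct)
    case empty then show ?case using L unfolding csubspace_def by simp
  next
    case (insert b F)
    then have "b \<in> L" "(\<Sum>b\<in>F. scaleC (c b) b) \<in> L" using B by auto
    then show ?case using insert L unfolding csubspace_def by simp
  qed
  then show "x \<in> L" using F by simp
qed

lemma cspan_convex: "convex (cspan (B::'a::complex_vector set))"
  unfolding convex_def by (auto simp: scaleR_scaleC intro!: cspan_add cspan_scaleC)

lemma onb_exists:
  fixes L :: "'a::chilbert_space set"
  assumes L: "closed_csubspace L"
  shows "\<exists>B. is_onb L B"
proof -
  have Ls: "csubspace L" and Lc: "closed L" using L unfolding closed_csubspace_def by auto
  define \<A> where "\<A> = {B. B \<subseteq> L \<and> orthonormal B}"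
  have "\<exists>M\<in>\<A>. \<forall>X\<in>\<A>. M \<subseteq> X \<longrightarrow> X = M"
  proof (rule subset_Zorn')
    fix \<C> assume ch: "subset.chain \<A> \<C>"
    then have sub: "\<C> \<subseteq> \<A>" and cmp: "\<forall>X\<in>\<C>. \<forall>Y\<in>\<C>. X \<subseteq> Y \<or> Y \<subseteq> X"
      by (auto simp: subset_chain_def)
    have "\<Union>\<C> \<subseteq> L" using sub by (auto simp: \<A>_def)
    moreover have "orthonormal (\<Union>\<C>)"
      unfolding orthonormal_def
    proof (intro conjI ballI impI)
      fix b assume "b \<in> \<Union>\<C>"
      then show "norm b = 1" using sub by (auto simp: \<A>_def orthonormal_def)
    next
      fix b b' assume b: "b \<in> \<Union>\<C>" and b': "b' \<in> \<Union>\<C>" and ne: "b \<noteq> b'"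
      from b b' obtain X Y where X: "X \<in> \<C>" "b \<in> X" and Y: "Y \<in> \<C>" "b' \<in> Y" by blast
      then have "X \<subseteq> Y \<or> Y \<subseteq> X" using cmp by blast
      then obtain Z where "Z \<in> \<C>" "b \<in> Z" "b' \<in> Z" using X Y by blast
      then show "cinner b b' = 0" using sub ne by (auto simp: \<A>_def orthonormal_def)
    qed
    ultimately show "\<Union>\<C> \<in> \<A>" by (simp add: \<A>_def)
  qed
  then obtain B where BA: "B \<in> \<A>" and max: "\<And>X. X \<in> \<A> \<Longrightarrow> B \<subseteq> X \<Longrightarrow> X = B" by blast
  have BL: "B \<subseteq> L" and Bon: "orthonormal B" using BA by (auto simp: \<A>_def)
  define M where "M = closure (cspan B)"
  have hML: "M \<subseteq> L" unfolding M_def by (rule closure_minimal[OF cspan_subset[OF Ls BL] Lc])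
  have "L \<subseteq> M"
  proof
    fix x assume xL: "x \<in> L"
    have clM: "closed M" by (simp add: M_def)
    have cvM: "convex M" by (simp add: M_def convex_closure cspan_convex)
    have neM: "M \<noteq> {}" using cspan_0 closure_subset unfolding M_def by blast
    have shift: "m + scaleC c b \<in> M" if "m \<in> M" "b \<in> B" for m c b
    proof -
      have v: "scaleC c b \<in> cspan B" by (rule cspan_scaleC[OF cspan_base[OF that(2)]])
      have "(\<lambda>y. y + scaleC c b) ` closure (cspan B) \<subseteq> closure (cspan B)"
      proof (rule image_closure_subset)
        show "continuous_on (closure (cspan B)) (\<lambda>y. y + scaleC c b)" by (intro continuous_intros)
        show "closed (closure (cspan B))" by simp
        show "(\<lambda>y. y + scaleC c b) ` cspan B \<subseteq> closure (cspan B)"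
          using cspan_add[OF _ v] closure_subset by blast
      qed
      then show ?thesis using that(1) unfolding M_def by blast
    qed
    obtain p where pM: "p \<in> M" and orth: "\<forall>b\<in>B. cinner (x - p) b = 0"
      using proj_orth[OF clM cvM neM shift] by blast
    define z where "z = x - p"
    have zL: "z \<in> L" unfolding z_def by (rule csubspace_diff[OF Ls xL]) (use pM hML in blast)
    have "z = 0"
    proof (rule ccontr)
      assume nz: "z \<noteq> 0"
      define u where "u = scaleC (complex_of_real (1 / norm z)) z"
      have nu: "norm u = 1" using nz by (simp add: u_def norm_scaleC norm_divide)
      have uL: "u \<in> L" using Ls zL unfolding u_def csubspace_def by blast
      have zb: "cinner z b = 0" if "b \<in> B" for b using orth that z_def by blast
      have ub: "cinner u b = 0" if "b \<in> B" for b using zb[OF that] by (simp add: u_def cinner_scaleC_left)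
      have bu: "cinner b u = 0" if "b \<in> B" for b
        using ub[OF that] by (metis cinner_commute complex_cnj_zero)
      have uB: "u \<notin> B"
      proof
        assume "u \<in> B"
        then have "cinner z u = 0" by (rule zb)
        then have "complex_of_real (1 / norm z) * cinner z z = 0" by (simp add: u_def cinner_scaleC_right)
        then show False using nz by (simp add: cinner_eq_zero_iff)
      qed
      have "insert u B \<in> \<A>"
        unfolding \<A>_def orthonormal_def using BL uL nu Bon ub bu
        by (auto simp: orthonormal_def)
      then have "insert u B = B" by (rule max) auto
      then show False using uB by blast
    qed
    then show "x \<in> M" using pM z_def by simp
  qed
  then have "closure (cspan B) = L" using hML M_def by blast
  then show ?thesis unfolding is_onb_def using BL Bon by blast
qed


definition Wop :: "('a \<Rightarrow> 'a) \<Rightarrow> ('a \<Rightarrow> 'a) \<Rightarrow> nat \<times> nat \<Rightarrow> 'a \<Rightarrow> 'a" where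
  "Wop A B k u = (A ^^ fst k) ((B ^^ snd k) u)"

definition Wadj :: "('a::complex_inner \<Rightarrow> 'a) \<Rightarrow> ('a \<Rightarrow> 'a) \<Rightarrow> nat \<times> nat \<Rightarrow> 'a \<Rightarrow> 'a" where
  "Wadj A B k x = (adj B ^^ snd k) ((adj A ^^ fst k) x)"

definition Aop :: "('a::complex_inner \<Rightarrow> 'a) \<Rightarrow> ('a \<Rightarrow> 'a) \<Rightarrow> 'a \<Rightarrow> nat \<times> nat \<Rightarrow> 'a" where
  "Aop A B x k = defect A B (Wadj A B k x)"

definition Top :: "('a::complex_inner \<Rightarrow> 'a) \<Rightarrow> ('a \<Rightarrow> 'a) \<Rightarrow> (nat \<times> nat \<Rightarrow> 'a) \<Rightarrow> 'a" where
  "Top A B f = infsum (\<lambda>k. Wop A B k (f k)) UNIV"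

definition Gset :: "('a::complex_inner \<Rightarrow> 'a) \<Rightarrow> ('a \<Rightarrow> 'a) \<Rightarrow> 'a set" where
  "Gset A B = {Wop A B k a | k a. a \<in> range (defect A B)}"

lemma orth_inv:
  fixes T :: "'a::chilbert_space \<Rightarrow> 'a"
  assumes T: "bounded_clinear T" and inv: "\<And>x. x \<in> S \<Longrightarrow> adj T x \<in> S" and y: "y \<in> orth_compl S"
  shows "T y \<in> orth_compl S"
  unfolding orth_compl_def
proof (intro CollectI ballI)
  fix x assume x: "x \<in> S"
  have "cinner x (T y) = cinner (adj T x) y" by (rule adj_prop[OF T, symmetric])
  also have "\<dots> = 0" using y inv[OF x] unfolding orth_compl_def by blast
  finally show "cinner x (T y) = 0" .
qed

lemma orth_inv_adj:
  fixes T :: "'a::chilbert_space \<Rightarrow> 'a"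
  assumes T: "bounded_clinear T" and inv: "\<And>x. x \<in> S \<Longrightarrow> T x \<in> S" and y: "y \<in> orth_compl S"
  shows "adj T y \<in> orth_compl S"
  unfolding orth_compl_def
proof (intro CollectI ballI)
  fix x assume x: "x \<in> S"
  have "cinner x (adj T y) = cinner (T x) y" by (rule adj_prop'[OF T])
  also have "\<dots> = 0" using y inv[OF x] unfolding orth_compl_def by blast
  finally show "cinner x (adj T y) = 0" .
qed

context
  fixes V1 V2 :: "'a::chilbert_space \<Rightarrow> 'a"
  assumes iso1: "isometry V1" and iso2: "isometry V2" and comm: "V1 \<circ> V2 = V2 \<circ> V1"
    and pos: "positive_op (defect V1 V2)"
begin

lemma b1: "bounded_clinear V1" using iso1 by (rule iso_bclin)
lemma b2: "bounded_clinear V2" using iso2 by (rule iso_bclin)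
lemma ba1: "bounded_clinear (adj V1)" using b1 by (rule bclin_adj)
lemma ba2: "bounded_clinear (adj V2)" using b2 by (rule bclin_adj)

lemma c12: "V1 (V2 u) = V2 (V1 u)" using fun_cong[OF comm, of u] by simp

lemma dsym: "defect V2 V1 = defect V1 V2" by (rule defect_sym[OF iso1 iso2 comm])

lemma pos2: "positive_op (defect V2 V1)" using pos dsym by simp

lemma comm2: "V2 \<circ> V1 = V1 \<circ> V2" using comm by simp

lemma CC: "defect V1 V2 (defect V1 V2 x) = defect V1 V2 x"
  by (rule pos_key(1)[OF iso1 iso2 comm pos])

lemma a2C: "adj V2 (defect V1 V2 x) = 0"
  by (rule pos_key(2)[OF iso1 iso2 comm pos])

lemma a1C: "adj V1 (defect V1 V2 x) = 0"
  using pos_key(2)[OF iso2 iso1 comm2 pos2] dsym by simp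

lemma key2: "adj V2 (V1 (y - V2 (adj V2 y))) = 0"
  by (rule pos_key(3)[OF iso1 iso2 comm pos])

lemma key1: "adj V1 (V2 (y - V1 (adj V1 y))) = 0"
  by (rule pos_key(3)[OF iso2 iso1 comm2 pos2])

lemma Csa: "cinner (defect V1 V2 x) z = cinner x (defect V1 V2 z)"
  by (rule pos_key(4)[OF iso1 iso2 comm pos])

lemma bC: "bounded_clinear (defect V1 V2)"
proof -
  have h1: "bounded_clinear (\<lambda>x. V1 (adj V1 x))" by (rule bclin_comp[OF b1 ba1])
  have h2: "bounded_clinear (\<lambda>x. V2 (adj V2 x))" by (rule bclin_comp[OF b2 ba2])
  have h3: "bounded_clinear (\<lambda>x. adj V2 (adj V1 x))" by (rule bclin_comp[OF ba2 ba1])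
  have h4: "bounded_clinear (\<lambda>x. V2 (adj V2 (adj V1 x)))" using bclin_comp[OF b2 h3] by simp
  have h5: "bounded_clinear (\<lambda>x. V1 (V2 (adj V2 (adj V1 x))))" using bclin_comp[OF b1 h4] by simp
  have h6: "bounded_clinear (\<lambda>x. x - V1 (adj V1 x))" using bclin_minus_op[OF bclin_id h1] by simp
  have h7: "bounded_clinear (\<lambda>x. x - V1 (adj V1 x) - V2 (adj V2 x))" using bclin_minus_op[OF h6 h2] by simp
  have h8: "bounded_clinear (\<lambda>x. x - V1 (adj V1 x) - V2 (adj V2 x) + V1 (V2 (adj V2 (adj V1 x))))"
    using bclin_plus[OF h7 h5] by simp
  then show ?thesis unfolding defect_def by simp
qed

lemma inL: "a \<in> range (defect V1 V2) \<Longrightarrow> defect V1 V2 a = a"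
  using CC by auto

lemma L_csub: "csubspace (range (defect V1 V2))"
  unfolding csubspace_def
proof (intro conjI ballI allI)
  show "0 \<in> range (defect V1 V2)" by (rule range_eqI[where x=0]) (simp add: bclin_zero[OF bC])
  show "x + y \<in> range (defect V1 V2)" if "x \<in> range (defect V1 V2)" "y \<in> range (defect V1 V2)" for x y
  proof (rule range_eqI[where x="x+y"])
    have "defect V1 V2 (x + y) = defect V1 V2 x + defect V1 V2 y" by (rule bclin_add[OF bC])
    also have "\<dots> = x + y" using inL[OF that(1)] inL[OF that(2)] by simp
    finally show "x + y = defect V1 V2 (x + y)" by simp
  qed
  show "scaleC c x \<in> range (defect V1 V2)" if "x \<in> range (defect V1 V2)" for c x
  proof (rule range_eqI[where x="scaleC c x"])
    have "defect V1 V2 (scaleC c x) = scaleC c (defect V1 V2 x)" by (rule bclin_scaleC[OF bC])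
    also have "\<dots> = scaleC c x" using inL[OF that(1)] by simp
    finally show "scaleC c x = defect V1 V2 (scaleC c x)" by simp
  qed
qed

lemma K2: "a \<in> range (defect V1 V2) \<Longrightarrow> adj V2 ((V1 ^^ i) a) = 0"
proof (induction i)
  case 0 then show ?case using a2C by auto
next
  case (Suc i)
  define u where "u = (V1 ^^ i) a"
  have "adj V2 u = 0" using Suc u_def by simp
  then have "u - V2 (adj V2 u) = u" by (simp add: bclin_zero[OF b2])
  then have "adj V2 (V1 u) = 0" using key2[of u] by simp
  then show ?case by (simp add: u_def)
qed

lemma K3: "a \<in> range (defect V1 V2) \<Longrightarrow> adj V1 ((V2 ^^ j) a) = 0"
proof (induction j)
  case 0 then show ?case using a1C by auto
next
  case (Suc j)
  define u where "u = (V2 ^^ j) a"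
  have "adj V1 u = 0" using Suc u_def by simp
  then have "u - V1 (adj V1 u) = u" by (simp add: bclin_zero[OF b1])
  then have "adj V1 (V2 u) = 0" using key1[of u] by simp
  then show ?case by (simp add: u_def)
qed

lemma pow_comm: "(V1 ^^ m) (V2 u) = V2 ((V1 ^^ m) u)"
  by (induction m) (simp_all add: c12)

lemma W00: "Wop V1 V2 (0, 0) u = u" by (simp add: Wop_def)

lemma WS1: "Wop V1 V2 (Suc m, n) u = V1 (Wop V1 V2 (m, n) u)" by (simp add: Wop_def)

lemma WS2: "Wop V1 V2 (m, Suc n) u = V2 (Wop V1 V2 (m, n) u)" by (simp add: Wop_def pow_comm)

lemma a1W: "a \<in> range (defect V1 V2) \<Longrightarrow>
  adj V1 (Wop V1 V2 (m, n) a) = (if m = 0 then 0 else Wop V1 V2 (m - 1, n) a)"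
proof (cases m)
  case 0
  assume a: "a \<in> range (defect V1 V2)"
  then show ?thesis using 0 K3[OF a, of n] by (simp add: Wop_def)
next
  case (Suc m')
  then show ?thesis by (simp add: WS1 iso_adj[OF iso1])
qed

lemma a2W: "a \<in> range (defect V1 V2) \<Longrightarrow>
  adj V2 (Wop V1 V2 (m, n) a) = (if n = 0 then 0 else Wop V1 V2 (m, n - 1) a)"
proof (cases n)
  case 0
  assume a: "a \<in> range (defect V1 V2)"
  then show ?thesis using 0 K2[OF a, of m] by (simp add: Wop_def)
next
  case (Suc n')
  then show ?thesis by (simp add: WS2 iso_adj[OF iso2])
qed

lemma W_orth:
  assumes a: "a \<in> range (defect V1 V2)" and b: "b \<in> range (defect V1 V2)"
  shows "cinner (Wop V1 V2 (m, n) a) (Wop V1 V2 (p, q) b) = (if (m, n) = (p, q) then cinner a b else 0)"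
proof -
  have "\<forall>m n p q. p + q = N \<longrightarrow>
     cinner (Wop V1 V2 (m, n) a) (Wop V1 V2 (p, q) b) = (if (m, n) = (p, q) then cinner a b else 0)" for N
  proof (induction N)
    case 0
    show ?case
    proof (intro allI impI)
      fix m n p q :: nat assume "p + q = 0"
      then have pq: "p = 0" "q = 0" by auto
      show "cinner (Wop V1 V2 (m, n) a) (Wop V1 V2 (p, q) b) = (if (m, n) = (p, q) then cinner a b else 0)"
      proof (cases m)
        case (Suc m')
        have "cinner (Wop V1 V2 (m, n) a) b = cinner (Wop V1 V2 (m', n) a) (adj V1 b)"
          by (simp add: Suc WS1 adj_prop'[OF b1, symmetric])
        then show ?thesis using pq Suc a1C b by (auto simp: W00)
      next
        case 0
        show ?thesis
        proof (cases n)
          case (Suc n')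
          have "cinner (Wop V1 V2 (m, n) a) b = cinner (Wop V1 V2 (m, n') a) (adj V2 b)"
            by (simp add: Suc WS2 adj_prop'[OF b2, symmetric])
          then show ?thesis using pq Suc a2C b by (auto simp: W00)
        next
          case 0
          then show ?thesis using pq \<open>m = 0\<close> by (simp add: W00)
        qed
      qed
    qed
  next
    case (Suc N)
    show ?case
    proof (intro allI impI)
      fix m n p q :: nat assume pqN: "p + q = Suc N"
      show "cinner (Wop V1 V2 (m, n) a) (Wop V1 V2 (p, q) b) = (if (m, n) = (p, q) then cinner a b else 0)"
      proof (cases p)
        case (Suc p')
        have e: "cinner (Wop V1 V2 (m, n) a) (Wop V1 V2 (p, q) b)
            = cinner (adj V1 (Wop V1 V2 (m, n) a)) (Wop V1 V2 (p', q) b)"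
          by (simp add: Suc WS1 adj_prop[OF b1])
        show ?thesis
        proof (cases m)
          case 0 then show ?thesis using e a1W[OF a, of m n] Suc by simp
        next
          case (Suc m')
          have "p' + q = N" using pqN \<open>p = Suc p'\<close> by simp
          then show ?thesis using e a1W[OF a, of m n] Suc \<open>p = Suc p'\<close> Suc.IH by simp
        qed
      next
        case 0
        then obtain q' where q': "q = Suc q'" using pqN by (cases q) auto
        have e: "cinner (Wop V1 V2 (m, n) a) (Wop V1 V2 (p, q) b)
            = cinner (adj V2 (Wop V1 V2 (m, n) a)) (Wop V1 V2 (p, q') b)"
          by (simp add: q' WS2 adj_prop[OF b2])
        show ?thesis
        proof (cases n)
          case 0 then show ?thesis using e a2W[OF a, of m n] q' by simp
        next
          case (Suc n')
          have "p + q' = N" using pqN q' by simp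
          then show ?thesis using e a2W[OF a, of m n] Suc q' Suc.IH by simp
        qed
      qed
    qed
  qed
  then show ?thesis by blast
qed

lemma W_orth':
  assumes a: "a \<in> range (defect V1 V2)" and b: "b \<in> range (defect V1 V2)"
  shows "cinner (Wop V1 V2 k a) (Wop V1 V2 j b) = (if k = j then cinner a b else 0)"
  using W_orth[OF a b, of "fst k" "snd k" "fst j" "snd j"] by simp

lemma W_adj: "cinner (Wop V1 V2 k u) x = cinner u (Wadj V1 V2 k x)"
  unfolding Wop_def Wadj_def by (simp add: pow_adj[OF b1] pow_adj[OF b2])

lemma W_iso: "cinner (Wop V1 V2 k u) (Wop V1 V2 k v) = cinner u v"
  unfolding Wop_def by (simp add: pow_iso[OF iso1] pow_iso[OF iso2])

lemma W_norm: "norm (Wop V1 V2 k u) = norm u"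
  using W_iso[of k u u] by (simp add: norm_eq_sqrt_cinner)

lemma bWadj: "bounded_clinear (Wadj V1 V2 k)"
proof -
  have "bounded_clinear (\<lambda>x. (adj V2 ^^ snd k) ((adj V1 ^^ fst k) x))"
    by (rule bclin_comp[OF bclin_funpow[OF ba2] bclin_funpow[OF ba1]])
  then show ?thesis unfolding Wadj_def by simp
qed

lemma bA: "bounded_clinear (\<lambda>x. Aop V1 V2 x k)"
proof -
  have "bounded_clinear (\<lambda>x. defect V1 V2 (Wadj V1 V2 k x))"
    by (rule bclin_comp[OF bC bWadj])
  then show ?thesis unfolding Aop_def by simp
qed

lemma A_inL: "Aop V1 V2 x k \<in> range (defect V1 V2)"
  unfolding Aop_def by simp

lemma A_inner: "a \<in> range (defect V1 V2) \<Longrightarrow> cinner a (Aop V1 V2 x k) = cinner (Wop V1 V2 k a) x"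
proof -
  assume a: "a \<in> range (defect V1 V2)"
  have "cinner a (Aop V1 V2 x k) = cinner (defect V1 V2 a) (Wadj V1 V2 k x)"
    unfolding Aop_def by (rule Csa[symmetric])
  also have "\<dots> = cinner a (Wadj V1 V2 k x)" by (simp only: inL[OF a])
  also have "\<dots> = cinner (Wop V1 V2 k a) x" by (rule W_adj[symmetric])
  finally show ?thesis .
qed

lemma A_add: "Aop V1 V2 (x + y) k = Aop V1 V2 x k + Aop V1 V2 y k"
  using bclin_add[OF bA] by simp

lemma A_diff: "Aop V1 V2 (x - y) k = Aop V1 V2 x k - Aop V1 V2 y k"
  using bclin_diff[OF bA] by simp

lemma A_scaleC: "Aop V1 V2 (scaleC c x) k = scaleC c (Aop V1 V2 x k)"
  using bclin_scaleC[OF bA] by simp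

lemma zero_L: "0 \<in> range (defect V1 V2)"
  using L_csub unfolding csubspace_def by blast

lemma A_V1: "Aop V1 V2 (V1 x) = Mz1 (Aop V1 V2 x)"
proof
  fix k :: "nat \<times> nat"
  obtain m n where k: "k = (m, n)" by (cases k)
  have inl: "Mz1 (Aop V1 V2 x) (m, n) \<in> range (defect V1 V2)"
    by (simp add: Mz1_def zero_L A_inL)
  have "Aop V1 V2 (V1 x) (m, n) = Mz1 (Aop V1 V2 x) (m, n)"
  proof (rule cinner_ext_in'[OF L_csub A_inL inl])
    fix a assume a: "a \<in> range (defect V1 V2)"
    have "cinner a (Aop V1 V2 (V1 x) (m, n)) = cinner (Wop V1 V2 (m, n) a) (V1 x)" by (rule A_inner[OF a])
    also have "\<dots> = cinner (adj V1 (Wop V1 V2 (m, n) a)) x" by (rule adj_prop[OF b1, symmetric])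
    also have "\<dots> = cinner a (Mz1 (Aop V1 V2 x) (m, n))"
    proof (cases m)
      case 0 then show ?thesis using a1W[OF a, of m n] by (simp add: Mz1_def)
    next
      case (Suc m')
      then show ?thesis using a1W[OF a, of m n] by (simp add: Mz1_def A_inner[OF a])
    qed
    finally show "cinner a (Aop V1 V2 (V1 x) (m, n)) = cinner a (Mz1 (Aop V1 V2 x) (m, n))" .
  qed
  then show "Aop V1 V2 (V1 x) k = Mz1 (Aop V1 V2 x) k" by (simp add: k)
qed

lemma A_V2: "Aop V1 V2 (V2 x) = Mz2 (Aop V1 V2 x)"
proof
  fix k :: "nat \<times> nat"
  obtain m n where k: "k = (m, n)" by (cases k)
  have inl: "Mz2 (Aop V1 V2 x) (m, n) \<in> range (defect V1 V2)"
    by (simp add: Mz2_def zero_L A_inL)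
  have "Aop V1 V2 (V2 x) (m, n) = Mz2 (Aop V1 V2 x) (m, n)"
  proof (rule cinner_ext_in'[OF L_csub A_inL inl])
    fix a assume a: "a \<in> range (defect V1 V2)"
    have "cinner a (Aop V1 V2 (V2 x) (m, n)) = cinner (Wop V1 V2 (m, n) a) (V2 x)" by (rule A_inner[OF a])
    also have "\<dots> = cinner (adj V2 (Wop V1 V2 (m, n) a)) x" by (rule adj_prop[OF b2, symmetric])
    also have "\<dots> = cinner a (Mz2 (Aop V1 V2 x) (m, n))"
    proof (cases n)
      case 0 then show ?thesis using a2W[OF a, of m n] by (simp add: Mz2_def)
    next
      case (Suc n')
      then show ?thesis using a2W[OF a, of m n] by (simp add: Mz2_def A_inner[OF a])
    qed
    finally show "cinner a (Aop V1 V2 (V2 x) (m, n)) = cinner a (Mz2 (Aop V1 V2 x) (m, n))" .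
  qed
  then show "Aop V1 V2 (V2 x) k = Mz2 (Aop V1 V2 x) k" by (simp add: k)
qed

lemma bessel: "(\<Sum>k\<in>F. (norm (Aop V1 V2 x k))\<^sup>2) \<le> (norm x)\<^sup>2"
proof (cases "finite F")
  case False then show ?thesis by simp
next
  case True
  define e where "e k = Wop V1 V2 k (Aop V1 V2 x k)" for k
  have orth: "cinner (e i) (e j) = 0" if "i \<noteq> j" for i j
    unfolding e_def using W_orth'[OF A_inL[of x i] A_inL[of x j], of i j] that by simp
  have ne: "norm (e k) = norm (Aop V1 V2 x k)" for k by (simp add: e_def W_norm)
  have ce: "Re (cinner x (e k)) = (norm (Aop V1 V2 x k))\<^sup>2" for k
  proof -
    have "cinner (e k) x = cinner (Aop V1 V2 x k) (Aop V1 V2 x k)"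
      unfolding e_def by (rule A_inner[OF A_inL, symmetric])
    then have "cinner x (e k) = cnj (cinner (Aop V1 V2 x k) (Aop V1 V2 x k))"
      by (metis cinner_commute)
    then show ?thesis by (simp add: cinner_self)
  qed
  define s where "s = sum e F"
  have "Re (cinner x s) = (\<Sum>k\<in>F. (norm (Aop V1 V2 x k))\<^sup>2)"
    by (simp add: s_def cinner_sum_right ce)
  moreover have "(norm s)\<^sup>2 = (\<Sum>k\<in>F. (norm (Aop V1 V2 x k))\<^sup>2)"
    unfolding s_def by (subst pythag) (use orth ne in auto)
  moreover have "0 \<le> (norm (x - s))\<^sup>2" by simp
  ultimately show ?thesis by (simp add: norm_diff_sq)
qed

lemma A_hardy: "Aop V1 V2 x \<in> hardy2_L (range (defect V1 V2))"
proof -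
  have "(\<lambda>k. (norm (Aop V1 V2 x k))\<^sup>2) summable_on UNIV"
  proof (rule nonneg_bdd_above_summable_on)
    show "bdd_above (sum (\<lambda>k. (norm (Aop V1 V2 x k))\<^sup>2) ` {F. F \<subseteq> UNIV \<and> finite F})"
      by (rule bdd_aboveI[where M="(norm x)\<^sup>2"]) (auto intro: bessel)
  qed simp
  then show ?thesis unfolding hardy2_L_def using A_inL by blast
qed

lemma T_facts:
  assumes f: "f \<in> hardy2_L (range (defect V1 V2))"
  shows "(\<lambda>k. Wop V1 V2 k (f k)) summable_on UNIV"
    and "((\<lambda>k. (norm (f k))\<^sup>2) has_sum (norm (Top V1 V2 f))\<^sup>2) UNIV"
proof -
  have fL: "f k \<in> range (defect V1 V2)" for k using f unfolding hardy2_L_def by blast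
  have fs: "(\<lambda>k. (norm (f k))\<^sup>2) summable_on UNIV" using f unfolding hardy2_L_def by blast
  have orth: "cinner (Wop V1 V2 i (f i)) (Wop V1 V2 j (f j)) = 0" if "i \<noteq> j" for i j
    using W_orth'[OF fL[of i] fL[of j], of i j] that by simp
  have sm: "(\<lambda>k. (norm (Wop V1 V2 k (f k)))\<^sup>2) summable_on UNIV" using fs by (simp add: W_norm)
  show "(\<lambda>k. Wop V1 V2 k (f k)) summable_on UNIV" by (rule orth_summable[OF orth sm])
  show "((\<lambda>k. (norm (f k))\<^sup>2) has_sum (norm (Top V1 V2 f))\<^sup>2) UNIV"
    using orth_has_sum_norm[OF orth sm] by (simp add: W_norm Top_def)
qed

lemma AT: 
  assumes f: "f \<in> hardy2_L (range (defect V1 V2))"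
  shows "Aop V1 V2 (Top V1 V2 f) = f"
proof
  fix k
  have fL: "f j \<in> range (defect V1 V2)" for j using f unfolding hardy2_L_def by blast
  have hs: "((\<lambda>j. Wop V1 V2 j (f j)) has_sum Top V1 V2 f) UNIV"
    unfolding Top_def using T_facts(1)[OF f] by (rule has_sum_infsum)
  have h1: "((\<lambda>j. Aop V1 V2 (Wop V1 V2 j (f j)) k) has_sum Aop V1 V2 (Top V1 V2 f) k) UNIV"
    using has_sum_bounded_linear[OF bclin_linear[OF bA] hs] by simp
  have pt: "Aop V1 V2 (Wop V1 V2 j (f j)) k = (if j = k then f k else 0)" for j
  proof (rule cinner_ext_in'[OF L_csub A_inL])
    show "(if j = k then f k else 0) \<in> range (defect V1 V2)" using fL zero_L by simp
    fix a assume a: "a \<in> range (defect V1 V2)"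
    have "cinner a (Aop V1 V2 (Wop V1 V2 j (f j)) k) = cinner (Wop V1 V2 k a) (Wop V1 V2 j (f j))"
      by (rule A_inner[OF a])
    also have "\<dots> = (if k = j then cinner a (f j) else 0)" by (rule W_orth'[OF a fL])
    also have "\<dots> = cinner a (if j = k then f k else 0)" by auto
    finally show "cinner a (Aop V1 V2 (Wop V1 V2 j (f j)) k) = cinner a (if j = k then f k else 0)" .
  qed
  have eqf: "(\<lambda>j. Aop V1 V2 (Wop V1 V2 j (f j)) k) = (\<lambda>j. if j = k then f k else 0)"
    by (rule ext) (rule pt)
  have "((\<lambda>j. if j = k then f k else 0) has_sum Aop V1 V2 (Top V1 V2 f) k) UNIV"
    using h1 by (simp only: eqf)
  then show "Aop V1 V2 (Top V1 V2 f) k = f k" by (rule has_sum_unique[OF _ has_sum_single])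
qed

lemma T_in_H0:
  assumes f: "f \<in> hardy2_L (range (defect V1 V2))"
  shows "Top V1 V2 f \<in> orth_compl (orth_compl (Gset V1 V2))"
proof -
  have hs: "((\<lambda>j. Wop V1 V2 j (f j)) has_sum Top V1 V2 f) UNIV"
    unfolding Top_def using T_facts(1)[OF f] by (rule has_sum_infsum)
  have fL: "f j \<in> range (defect V1 V2)" for j using f unfolding hardy2_L_def by blast
  have "cinner s (Top V1 V2 f) = 0" if s: "s \<in> orth_compl (Gset V1 V2)" for s
  proof -
    have h1: "((\<lambda>j. cinner s (Wop V1 V2 j (f j))) has_sum cinner s (Top V1 V2 f)) UNIV"
      by (rule has_sum_bounded_linear[OF bounded_linear_cinner_right hs])
    have "cinner s (Wop V1 V2 j (f j)) = 0" for j
    proof -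
      have "Wop V1 V2 j (f j) \<in> Gset V1 V2" unfolding Gset_def using fL by blast
      then have "cinner (Wop V1 V2 j (f j)) s = 0" using s unfolding orth_compl_def by blast
      then show ?thesis by (metis cinner_commute complex_cnj_zero)
    qed
    then have "((\<lambda>j. cinner s (Wop V1 V2 j (f j))) has_sum 0) UNIV" by simp
    then show ?thesis using h1 by (rule has_sum_unique[symmetric])
  qed
  then show ?thesis unfolding orth_compl_def by blast
qed

lemma H0_TA:
  assumes x: "x \<in> orth_compl (orth_compl (Gset V1 V2))"
  shows "Top V1 V2 (Aop V1 V2 x) = x"
proof -
  define y where "y = Top V1 V2 (Aop V1 V2 x)"
  have Ay: "Aop V1 V2 y = Aop V1 V2 x" unfolding y_def by (rule AT[OF A_hardy])
  define z where "z = x - y"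
  have zH: "z \<in> orth_compl (orth_compl (Gset V1 V2))"
    unfolding z_def by (rule csubspace_diff[OF orth_compl_csubspace x]) (unfold y_def, rule T_in_H0[OF A_hardy])
  have Az: "Aop V1 V2 z k = 0" for k by (simp add: z_def A_diff Ay)
  have "z \<in> orth_compl (Gset V1 V2)"
    unfolding orth_compl_def Gset_def
  proof (intro CollectI ballI)
    fix g assume "g \<in> {Wop V1 V2 k a | k a. a \<in> range (defect V1 V2)}"
    then obtain k a where g: "g = Wop V1 V2 k a" and a: "a \<in> range (defect V1 V2)" by blast
    have "cinner (Wop V1 V2 k a) z = cinner a (Aop V1 V2 z k)" by (rule A_inner[OF a, symmetric])
    then show "cinner g z = 0" by (simp add: Az g)
  qed
  then have "cinner z z = 0" using zH unfolding orth_compl_def by blast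
  then have "z = 0" by (simp add: cinner_eq_zero_iff)
  then show ?thesis by (simp add: z_def y_def)
qed

lemma G_V1: "g \<in> Gset V1 V2 \<Longrightarrow> V1 g \<in> Gset V1 V2"
proof -
  assume "g \<in> Gset V1 V2"
  then obtain m n a where g: "g = Wop V1 V2 (m, n) a" and a: "a \<in> range (defect V1 V2)"
    unfolding Gset_def by auto
  have "V1 g = Wop V1 V2 (Suc m, n) a" by (simp add: g WS1)
  then show ?thesis unfolding Gset_def using a by blast
qed

lemma G_V2: "g \<in> Gset V1 V2 \<Longrightarrow> V2 g \<in> Gset V1 V2"
proof -
  assume "g \<in> Gset V1 V2"
  then obtain m n a where g: "g = Wop V1 V2 (m, n) a" and a: "a \<in> range (defect V1 V2)"
    unfolding Gset_def by auto
  have "V2 g = Wop V1 V2 (m, Suc n) a" by (simp add: g WS2)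
  then show ?thesis unfolding Gset_def using a by blast
qed

lemma G_zero: "0 \<in> Gset V1 V2"
proof -
  show ?thesis unfolding Gset_def
  proof (rule CollectI, intro exI conjI)
    show "0 = Wop V1 V2 (0, 0) 0" by (simp add: W00)
    show "0 \<in> range (defect V1 V2)" by (rule zero_L)
  qed
qed

lemma G_a1: "g \<in> Gset V1 V2 \<Longrightarrow> adj V1 g \<in> Gset V1 V2"
proof -
  assume "g \<in> Gset V1 V2"
  then obtain m n a where g: "g = Wop V1 V2 (m, n) a" and a: "a \<in> range (defect V1 V2)"
    unfolding Gset_def by auto
  show ?thesis
  proof (cases "m = 0")
    case True then show ?thesis using a1W[OF a, of m n] g G_zero by simp
  next
    case False
    then have "adj V1 g = Wop V1 V2 (m - 1, n) a" using a1W[OF a, of m n] g by simp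
    then show ?thesis unfolding Gset_def using a by blast
  qed
qed

lemma G_a2: "g \<in> Gset V1 V2 \<Longrightarrow> adj V2 g \<in> Gset V1 V2"
proof -
  assume "g \<in> Gset V1 V2"
  then obtain m n a where g: "g = Wop V1 V2 (m, n) a" and a: "a \<in> range (defect V1 V2)"
    unfolding Gset_def by auto
  show ?thesis
  proof (cases "n = 0")
    case True then show ?thesis using a2W[OF a, of m n] g G_zero by simp
  next
    case False
    then have "adj V2 g = Wop V1 V2 (m, n - 1) a" using a2W[OF a, of m n] g by simp
    then show ?thesis unfolding Gset_def using a by blast
  qed
qed

lemma S_a1: "s \<in> orth_compl (Gset V1 V2) \<Longrightarrow> adj V1 s \<in> orth_compl (Gset V1 V2)"
  by (rule orth_inv_adj[OF b1 G_V1])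
lemma S_a2: "s \<in> orth_compl (Gset V1 V2) \<Longrightarrow> adj V2 s \<in> orth_compl (Gset V1 V2)"
  by (rule orth_inv_adj[OF b2 G_V2])
lemma S_V1: "s \<in> orth_compl (Gset V1 V2) \<Longrightarrow> V1 s \<in> orth_compl (Gset V1 V2)"
  by (rule orth_inv[OF b1 G_a1])
lemma S_V2: "s \<in> orth_compl (Gset V1 V2) \<Longrightarrow> V2 s \<in> orth_compl (Gset V1 V2)"
  by (rule orth_inv[OF b2 G_a2])

lemma H_V1: "x \<in> orth_compl (orth_compl (Gset V1 V2)) \<Longrightarrow> V1 x \<in> orth_compl (orth_compl (Gset V1 V2))"
  by (rule orth_inv[OF b1 S_a1])
lemma H_V2: "x \<in> orth_compl (orth_compl (Gset V1 V2)) \<Longrightarrow> V2 x \<in> orth_compl (orth_compl (Gset V1 V2))"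
  by (rule orth_inv[OF b2 S_a2])
lemma H_a1: "x \<in> orth_compl (orth_compl (Gset V1 V2)) \<Longrightarrow> adj V1 x \<in> orth_compl (orth_compl (Gset V1 V2))"
  by (rule orth_inv_adj[OF b1 S_V1])
lemma H_a2: "x \<in> orth_compl (orth_compl (Gset V1 V2)) \<Longrightarrow> adj V2 x \<in> orth_compl (orth_compl (Gset V1 V2))"
  by (rule orth_inv_adj[OF b2 S_V2])

lemma P_V1: "y \<in> orth_compl (orth_compl (orth_compl (Gset V1 V2))) \<Longrightarrow> V1 y \<in> orth_compl (orth_compl (orth_compl (Gset V1 V2)))"
  by (rule orth_inv[OF b1 H_a1])
lemma P_V2: "y \<in> orth_compl (orth_compl (orth_compl (Gset V1 V2))) \<Longrightarrow> V2 y \<in> orth_compl (orth_compl (orth_compl (Gset V1 V2)))"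
  by (rule orth_inv[OF b2 H_a2])
lemma P_a1: "y \<in> orth_compl (orth_compl (orth_compl (Gset V1 V2))) \<Longrightarrow> adj V1 y \<in> orth_compl (orth_compl (orth_compl (Gset V1 V2)))"
  by (rule orth_inv_adj[OF b1 H_V1])
lemma P_a2: "y \<in> orth_compl (orth_compl (orth_compl (Gset V1 V2))) \<Longrightarrow> adj V2 y \<in> orth_compl (orth_compl (orth_compl (Gset V1 V2)))"
  by (rule orth_inv_adj[OF b2 H_V2])

lemma L_sub_H: "range (defect V1 V2) \<subseteq> orth_compl (orth_compl (Gset V1 V2))"
proof -
  have "range (defect V1 V2) \<subseteq> Gset V1 V2"
  proof
    fix a assume a: "a \<in> range (defect V1 V2)"
    have "a = Wop V1 V2 (0, 0) a" by (simp add: W00)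
    then show "a \<in> Gset V1 V2" unfolding Gset_def using a by blast
  qed
  then show ?thesis using subset_orth_orth by blast
qed

lemma defect_on_zero:
  assumes x: "x \<in> orth_compl (orth_compl (orth_compl (Gset V1 V2)))"
  shows "defect_on (orth_compl (orth_compl (orth_compl (Gset V1 V2)))) V1 V2 x = 0"
proof -
  define P where "P = orth_compl (orth_compl (orth_compl (Gset V1 V2)))"
  have Ps: "csubspace P" unfolding P_def by (rule orth_compl_csubspace)
  have xP: "x \<in> P" using x P_def by simp
  have e1: "adj_on P V1 y = adj V1 y" if "y \<in> P" for y
    by (rule adj_on_eq[OF Ps b1 _ that]) (use P_a1 P_def in simp)
  have e2: "adj_on P V2 y = adj V2 y" if "y \<in> P" for y
    by (rule adj_on_eq[OF Ps b2 _ that]) (use P_a2 P_def in simp)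
  have a1x: "adj V1 x \<in> P" using P_a1 xP P_def by simp
  have "defect_on P V1 V2 x = defect V1 V2 x"
    unfolding defect_on_def defect_def using e1[OF xP] e2[OF xP] e2[OF a1x] by simp
  moreover have "defect V1 V2 x = 0"
  proof -
    have "defect V1 V2 x \<in> orth_compl (orth_compl (Gset V1 V2))" using L_sub_H by blast
    then have z: "cinner (defect V1 V2 x) x = 0" using x unfolding orth_compl_def[of "orth_compl (orth_compl (Gset V1 V2))"] by blast
    have "cinner (defect V1 V2 x) (defect V1 V2 x) = cinner (defect V1 V2 (defect V1 V2 x)) x"
      by (rule Csa[symmetric])
    also have "\<dots> = 0" by (simp add: CC z)
    finally show ?thesis by (simp add: cinner_eq_zero_iff)
  qed
  ultimately show ?thesis by (simp add: P_def)
qed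

lemma L_closed_csub: "closed_csubspace (range (defect V1 V2))"
proof -
  have eq: "range (defect V1 V2) = {x. defect V1 V2 x = x}"
  proof
    show "range (defect V1 V2) \<subseteq> {x. defect V1 V2 x = x}" using inL by blast
    show "{x. defect V1 V2 x = x} \<subseteq> range (defect V1 V2)"
    proof
      fix x assume "x \<in> {x. defect V1 V2 x = x}"
      then have "x = defect V1 V2 x" by simp
      then show "x \<in> range (defect V1 V2)" by (rule range_eqI)
    qed
  qed
  have "closed {x. defect V1 V2 x = x}"
    by (rule closed_Collect_eq) (auto intro: linear_continuous_on[OF bclin_linear[OF bC]] continuous_on_id)
  then show ?thesis unfolding closed_csubspace_def using L_csub eq by simp
qed

lemma L_ker: "range (defect V1 V2) \<subseteq> {x. adj (V1 \<circ> V2) x = 0}"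
proof
  fix a assume "a \<in> range (defect V1 V2)"
  then obtain y where a: "a = defect V1 V2 y" by blast
  have "adj (V1 \<circ> V2) a = adj V2 (adj V1 a)" by (simp add: adj_comp[OF b1 b2])
  also have "\<dots> = 0" by (simp add: a a1C bclin_zero[OF ba2])
  finally show "a \<in> {x. adj (V1 \<circ> V2) x = 0}" by simp
qed

lemma L_ne_ker:
  assumes nz: "defect V1 V2 \<noteq> (\<lambda>x. 0)"
  shows "range (defect V1 V2) \<noteq> {x. adj (V1 \<circ> V2) x = 0}"
proof
  assume eq: "range (defect V1 V2) = {x. adj (V1 \<circ> V2) x = 0}"
  obtain x0 where x0: "defect V1 V2 x0 \<noteq> 0" using nz by auto
  define a where "a = defect V1 V2 x0"
  have "adj (V1 \<circ> V2) (V1 a) = adj V2 (adj V1 (V1 a))" by (simp add: adj_comp[OF b1 b2])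
  also have "\<dots> = 0" by (simp add: iso_adj[OF iso1] a_def a2C)
  finally have "V1 a \<in> range (defect V1 V2)" using eq by simp
  then obtain z where z: "V1 a = defect V1 V2 z" by blast
  have "cinner a a = cinner (V1 a) (V1 a)" by (rule iso_inner[OF iso1, symmetric])
  also have "\<dots> = cinner (V1 a) (defect V1 V2 z)" using z by simp
  also have "\<dots> = cinner a (adj V1 (defect V1 V2 z))" by (rule adj_prop'[OF b1, symmetric])
  also have "\<dots> = 0" by (simp add: a1C)
  finally have "a = 0" by (simp add: cinner_eq_zero_iff)
  then show False using x0 a_def by simp
qed

lemma L_ne0:
  assumes nz: "defect V1 V2 \<noteq> (\<lambda>x. 0)"
  shows "range (defect V1 V2) \<noteq> {0}"
proof
  assume eq: "range (defect V1 V2) = {0}"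
  have "defect V1 V2 x = 0" for x using eq by (metis rangeI singletonD)
  then show False using nz by auto
qed

lemma unitary: "unitary_onto_hardy (orth_compl (orth_compl (Gset V1 V2))) (range (defect V1 V2)) (Aop V1 V2)"
  unfolding unitary_onto_hardy_def
proof (intro conjI ballI allI)
  let ?H = "orth_compl (orth_compl (Gset V1 V2))"
  show "bij_betw (Aop V1 V2) ?H (hardy2_L (range (defect V1 V2)))"
    unfolding bij_betw_def
  proof
    show "inj_on (Aop V1 V2) ?H"
    proof (rule inj_onI)
      fix x y assume x: "x \<in> ?H" and y: "y \<in> ?H" and e: "Aop V1 V2 x = Aop V1 V2 y"
      have "x = Top V1 V2 (Aop V1 V2 x)" by (rule H0_TA[OF x, symmetric])
      also have "\<dots> = Top V1 V2 (Aop V1 V2 y)" by (simp add: e)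
      also have "\<dots> = y" by (rule H0_TA[OF y])
      finally show "x = y" .
    qed
    show "Aop V1 V2 ` ?H = hardy2_L (range (defect V1 V2))"
    proof
      show "Aop V1 V2 ` ?H \<subseteq> hardy2_L (range (defect V1 V2))" using A_hardy by blast
      show "hardy2_L (range (defect V1 V2)) \<subseteq> Aop V1 V2 ` ?H"
      proof
        fix f assume f: "f \<in> hardy2_L (range (defect V1 V2))"
        have "f = Aop V1 V2 (Top V1 V2 f)" by (rule AT[OF f, symmetric])
        then show "f \<in> Aop V1 V2 ` ?H" using T_in_H0[OF f] by blast
      qed
    qed
  qed
  show "Aop V1 V2 (x + y) = (\<lambda>k. Aop V1 V2 x k + Aop V1 V2 y k)" for x y
    by (rule ext) (rule A_add)
  show "Aop V1 V2 (scaleC c x) = (\<lambda>k. scaleC c (Aop V1 V2 x k))" for c x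
    by (rule ext) (rule A_scaleC)
  show "(norm x)\<^sup>2 = infsum (\<lambda>k. (norm (Aop V1 V2 x k))\<^sup>2) UNIV" if x: "x \<in> ?H" for x
  proof -
    have "((\<lambda>k. (norm (Aop V1 V2 x k))\<^sup>2) has_sum (norm (Top V1 V2 (Aop V1 V2 x)))\<^sup>2) UNIV"
      by (rule T_facts(2)[OF A_hardy])
    then have "infsum (\<lambda>k. (norm (Aop V1 V2 x k))\<^sup>2) UNIV = (norm (Top V1 V2 (Aop V1 V2 x)))\<^sup>2"
      by (rule infsumI)
    then show ?thesis by (simp add: H0_TA[OF x])
  qed
qed

lemma same_dim: "same_hilbert_dim (range (defect V1 V2)) (closure (range (defect V1 V2)))"
proof -
  have cl: "closure (range (defect V1 V2)) = range (defect V1 V2)"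
    using L_closed_csub unfolding closed_csubspace_def by (simp add: closure_closed)
  obtain B where B: "is_onb (range (defect V1 V2)) B" using onb_exists[OF L_closed_csub] by blast
  show ?thesis unfolding same_hilbert_dim_def cl using B bij_betw_id by blast
qed

end

theorem theorem4p9:
  fixes V1 V2 :: "'a::chilbert_space \<Rightarrow> 'a"
  assumes "isometry V1" and "isometry V2"
    and "V1 \<circ> V2 = V2 \<circ> V1"
    and "positive_op (defect V1 V2)"
    and "defect V1 V2 \<noteq> (\<lambda>x. 0)"
  shows "\<exists>L H0 U.
           closed_csubspace L \<and> L \<noteq> {0} \<and>
           L \<subseteq> {x. adj (V1 \<circ> V2) x = 0} \<and> L \<noteq> {x. adj (V1 \<circ> V2) x = 0} \<and>
           closed_csubspace H0 \<and>
           unitary_onto_hardy H0 L U \<and>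
           V1 ` H0 \<subseteq> H0 \<and> V2 ` H0 \<subseteq> H0 \<and>
           V1 ` orth_compl H0 \<subseteq> orth_compl H0 \<and> V2 ` orth_compl H0 \<subseteq> orth_compl H0 \<and>
           (\<forall>x\<in>H0. U (V1 x) = Mz1 (U x) \<and> U (V2 x) = Mz2 (U x)) \<and>
           (\<forall>x\<in>orth_compl H0. defect_on (orth_compl H0) V1 V2 x = 0) \<and>
           same_hilbert_dim L (closure (range (defect V1 V2)))"
proof (intro exI conjI)
  note a = assms(1-4)
  show "closed_csubspace (range (defect V1 V2))" by (rule L_closed_csub[OF a])
  show "range (defect V1 V2) \<noteq> {0}" by (rule L_ne0[OF a assms(5)])
  show "range (defect V1 V2) \<subseteq> {x. adj (V1 \<circ> V2) x = 0}" by (rule L_ker[OF a])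
  show "range (defect V1 V2) \<noteq> {x. adj (V1 \<circ> V2) x = 0}" by (rule L_ne_ker[OF a assms(5)])
  show "closed_csubspace (orth_compl (orth_compl (Gset V1 V2)))" by (rule orth_compl_closed_csubspace)
  show "unitary_onto_hardy (orth_compl (orth_compl (Gset V1 V2))) (range (defect V1 V2)) (Aop V1 V2)"
    by (rule unitary[OF a])
  show "V1 ` orth_compl (orth_compl (Gset V1 V2)) \<subseteq> orth_compl (orth_compl (Gset V1 V2))"
    using H_V1[OF a] by blast
  show "V2 ` orth_compl (orth_compl (Gset V1 V2)) \<subseteq> orth_compl (orth_compl (Gset V1 V2))"
    using H_V2[OF a] by blast
  show "V1 ` orth_compl (orth_compl (orth_compl (Gset V1 V2))) \<subseteq> orth_compl (orth_compl (orth_compl (Gset V1 V2)))"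
    using P_V1[OF a] by blast
  show "V2 ` orth_compl (orth_compl (orth_compl (Gset V1 V2))) \<subseteq> orth_compl (orth_compl (orth_compl (Gset V1 V2)))"
    using P_V2[OF a] by blast
  show "\<forall>x\<in>orth_compl (orth_compl (Gset V1 V2)). Aop V1 V2 (V1 x) = Mz1 (Aop V1 V2 x) \<and> Aop V1 V2 (V2 x) = Mz2 (Aop V1 V2 x)"
    using A_V1[OF a] A_V2[OF a] by blast
  show "\<forall>x\<in>orth_compl (orth_compl (orth_compl (Gset V1 V2))). defect_on (orth_compl (orth_compl (orth_compl (Gset V1 V2)))) V1 V2 x = 0"
    using defect_on_zero[OF a] by blast
  show "same_hilbert_dim (range (defect V1 V2)) (closure (range (defect V1 V2)))"
    by (rule same_dim[OF a])
qed


end
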